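(* The operator $\mathbf{V}\mapsto\mathbf{V}^{\mathsf{bar}}$ on the lattice of pseudovarieties of finite semigroups is continuous (order preserving and preserving directed joins), non-decreasing ($\mathbf{V}\subseteq\mathbf{V}^{\mathsf{bar}}$) and idempotent ($(\mathbf{V}^{\mathsf{bar}})^{\mathsf{bar}}=\mathbf{V}^{\mathsf{bar}}$). Further: (i) $\llbracket S\rrbracket^{\mathsf{bar}}=\llbracket S^{\mathsf{bar}}\rrbracket$ for every finite semigroup $S$; (ii) $\mathbf{RZ}\subseteq\mathbf{V}^{\mathsf{bar}}$ for every nontrivial pseudovariety $\mathbf{V}$. Consequently, if $\llbracket S\rrbracket=\llbracket T\rrbracket$ then $\llbracket S^{\mathsf{bar}}\rrbracket=\llbracket T^{\mathsf{bar}}\rrbracket$.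
   Context: All semigroups are finite. A pseudovariety is a class of finite semigroups closed under finite direct products, subsemigroups and homomorphic images; $\llbracket\mathscr{K}\rrbracket$ is the pseudovariety generated by a class $\mathscr{K}$. $\mathbf{RZ}$ is the pseudovariety of right zero semigroups ($xy=y$). For a semigroup $S$, $S^\bullet=S$ if $S$ is a monoid and $S^\bullet=S^I$ (external identity adjoined) otherwise; $S^{\mathsf{bar}}$ is the semigroup of transformations of $S^\bullet$ (acting on the right) consisting of right multiplications by elements of $S$ together with all constant maps on $S^\bullet$. For a pseudovariety $\mathbf{V}$, $\mathbf{V}^{\mathsf{bar}}=\llbracket S^{\mathsf{bar}}\mid S\in\mathbf{V}\rrbracket$. *)

theory Defs
  imports Main "HOL-Library.FuncSet"
begin

text \<open>A semigroup is given by a carrier set and a binary operation (the values of the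
operation outside the carrier are irrelevant). Semigroups are nonempty.\<close>

definition sgrp :: "'a set \<Rightarrow> ('a \<Rightarrow> 'a \<Rightarrow> 'a) \<Rightarrow> bool" where
  "sgrp A m \<longleftrightarrow> A \<noteq> {} \<and> (\<forall>x\<in>A. \<forall>y\<in>A. m x y \<in> A)
     \<and> (\<forall>x\<in>A. \<forall>y\<in>A. \<forall>z\<in>A. m (m x y) z = m x (m y z))"

definition fsg :: "'a set \<Rightarrow> ('a \<Rightarrow> 'a \<Rightarrow> 'a) \<Rightarrow> bool" where
  "fsg A m \<longleftrightarrow> finite A \<and> sgrp A m"

definition shom :: "('a \<Rightarrow> 'b) \<Rightarrow> 'a set \<Rightarrow> ('a \<Rightarrow> 'a \<Rightarrow> 'a) \<Rightarrow> 'b set \<Rightarrow> ('b \<Rightarrow> 'b \<Rightarrow> 'b) \<Rightarrow> bool" where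
  "shom h A m B n \<longleftrightarrow> (\<forall>x\<in>A. h x \<in> B) \<and> (\<forall>x\<in>A. \<forall>y\<in>A. h (m x y) = n (h x) (h y))"

definition isomorphic :: "'a set \<Rightarrow> ('a \<Rightarrow> 'a \<Rightarrow> 'a) \<Rightarrow> 'b set \<Rightarrow> ('b \<Rightarrow> 'b \<Rightarrow> 'b) \<Rightarrow> bool" where
  "isomorphic A m B n \<longleftrightarrow> (\<exists>h. shom h A m B n \<and> bij_betw h A B)"

definition prod_mult :: "('a \<Rightarrow> 'a \<Rightarrow> 'a) \<Rightarrow> ('b \<Rightarrow> 'b \<Rightarrow> 'b) \<Rightarrow> 'a \<times> 'b \<Rightarrow> 'a \<times> 'b \<Rightarrow> 'a \<times> 'b" where
  "prod_mult m n p q = (m (fst p) (fst q), n (snd p) (snd q))"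

text \<open>Classes of finite semigroups are represented by their members with carrier a
subset of nat (every finite semigroup has an isomorphic copy of this form).\<close>

type_synonym nsg = "nat set \<times> (nat \<Rightarrow> nat \<Rightarrow> nat)"

definition pseudovariety :: "nsg set \<Rightarrow> bool" where
  "pseudovariety V \<longleftrightarrow>
     (\<forall>(A, m)\<in>V. fsg A m)
   \<and> (\<forall>A m. fsg A m \<and> card A = 1 \<longrightarrow> (A, m) \<in> V)
   \<and> (\<forall>A m B n C p. (A, m) \<in> V \<and> (B, n) \<in> V \<and> fsg C p
          \<and> isomorphic (A \<times> B) (prod_mult m n) C p \<longrightarrow> (C, p) \<in> V)
   \<and> (\<forall>A m B. (A, m) \<in> V \<and> B \<subseteq> A \<and> sgrp B m \<longrightarrow> (B, m) \<in> V)
   \<and> (\<forall>A m B n h. (A, m) \<in> V \<and> fsg B n \<and> shom h A m B n \<and> h ` A = B \<longrightarrow> (B, n) \<in> V)"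

definition memb :: "nsg set \<Rightarrow> 'a set \<Rightarrow> ('a \<Rightarrow> 'a \<Rightarrow> 'a) \<Rightarrow> bool" where
  "memb V A m \<longleftrightarrow> (\<exists>(B, n)\<in>V. isomorphic B n A m)"

definition pv_gen :: "('a set \<times> ('a \<Rightarrow> 'a \<Rightarrow> 'a)) set \<Rightarrow> nsg set" where
  "pv_gen K = \<Inter>{V. pseudovariety V \<and> (\<forall>(A, m)\<in>K. memb V A m)}"

definition is_monoid :: "'a set \<Rightarrow> ('a \<Rightarrow> 'a \<Rightarrow> 'a) \<Rightarrow> bool" where
  "is_monoid A m \<longleftrightarrow> (\<exists>e\<in>A. \<forall>x\<in>A. m e x = x \<and> m x e = x)"

text \<open>S-dot: S itself if S is a monoid, else S with an external identity None adjoined.\<close>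
definition Sdot :: "'a set \<Rightarrow> ('a \<Rightarrow> 'a \<Rightarrow> 'a) \<Rightarrow> 'a option set" where
  "Sdot A m = (if is_monoid A m then Some ` A else insert None (Some ` A))"

fun dmult :: "('a \<Rightarrow> 'a \<Rightarrow> 'a) \<Rightarrow> 'a option \<Rightarrow> 'a option \<Rightarrow> 'a option" where
  "dmult m None y = y"
| "dmult m (Some a) None = Some a"
| "dmult m (Some a) (Some b) = Some (m a b)"

definition rmul :: "'a set \<Rightarrow> ('a \<Rightarrow> 'a \<Rightarrow> 'a) \<Rightarrow> 'a \<Rightarrow> 'a option \<Rightarrow> 'a option" where
  "rmul A m s = restrict (\<lambda>x. dmult m x (Some s)) (Sdot A m)"

definition cst :: "'a set \<Rightarrow> ('a \<Rightarrow> 'a \<Rightarrow> 'a) \<Rightarrow> 'a option \<Rightarrow> 'a option \<Rightarrow> 'a option" where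
  "cst A m c = restrict (\<lambda>x. c) (Sdot A m)"

definition bar_carrier :: "'a set \<Rightarrow> ('a \<Rightarrow> 'a \<Rightarrow> 'a) \<Rightarrow> ('a option \<Rightarrow> 'a option) set" where
  "bar_carrier A m = rmul A m ` A \<union> cst A m ` Sdot A m"

text \<open>Product of transformations acting on the right: x(fg) = (xf)g.\<close>
definition bar_mult :: "'a set \<Rightarrow> ('a \<Rightarrow> 'a \<Rightarrow> 'a)
    \<Rightarrow> ('a option \<Rightarrow> 'a option) \<Rightarrow> ('a option \<Rightarrow> 'a option) \<Rightarrow> ('a option \<Rightarrow> 'a option)" where
  "bar_mult A m f g = restrict (g \<circ> f) (Sdot A m)"

definition pv_bar :: "nsg set \<Rightarrow> nsg set" where
  "pv_bar V = pv_gen {(bar_carrier A m, bar_mult A m) | A m. (A, m) \<in> V}"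

definition RZ :: "nsg set" where
  "RZ = {(A, m). fsg A m \<and> (\<forall>x\<in>A. \<forall>y\<in>A. m x y = y)}"

definition directed :: "nsg set set \<Rightarrow> bool" where
  "directed \<V> \<longleftrightarrow> \<V> \<noteq> {} \<and> (\<forall>V\<in>\<V>. \<forall>W\<in>\<V>. \<exists>U\<in>\<V>. V \<subseteq> U \<and> W \<subseteq> U)"

definition pv_Join :: "nsg set set \<Rightarrow> nsg set" where
  "pv_Join \<V> = pv_gen (\<Union>\<V>)"

end

theory Submission
  imports Defs
begin


lemma sgrpD: assumes "sgrp A m"
  shows "A \<noteq> {}" "\<And>x y. x \<in> A \<Longrightarrow> y \<in> A \<Longrightarrow> m x y \<in> A"
    "\<And>x y z. x \<in> A \<Longrightarrow> y \<in> A \<Longrightarrow> z \<in> A \<Longrightarrow> m (m x y) z = m x (m y z)"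
  using assms unfolding sgrp_def by blast+

lemma sgrp_hom_image:
  assumes "sgrp A m" "shom h A m B n" "h ` A = B"
  shows "sgrp B n"
proof -
  have cl: "n x y \<in> B" if xyB: "x \<in> B" "y \<in> B" for x y
  proof -
    obtain a b where "a \<in> A" "b \<in> A" "x = h a" "y = h b" using xyB unfolding assms(3)[symmetric] by blast
    hence "n x y = h (m a b)" "m a b \<in> A" using assms(1,2) unfolding shom_def sgrp_def by auto
    thus ?thesis using assms(3) by blast
  qed
  have as: "n (n x y) z = n x (n y z)" if xyzB: "x \<in> B" "y \<in> B" "z \<in> B" for x y z
  proof -
    obtain a b c where abc: "a \<in> A" "b \<in> A" "c \<in> A" "x = h a" "y = h b" "z = h c" using xyzB unfolding assms(3)[symmetric] by blast
    have hm: "h (m u v) = n (h u) (h v)" if "u \<in> A" "v \<in> A" for u v using assms(2) that unfolding shom_def by blast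
    have cA: "m u v \<in> A" if "u \<in> A" "v \<in> A" for u v using assms(1) that unfolding sgrp_def by blast
    have "n (n x y) z = h (m (m a b) c)" using abc hm cA by simp
    also have "\<dots> = h (m a (m b c))" using abc assms(1) unfolding sgrp_def by auto
    also have "\<dots> = n x (n y z)" using abc hm cA by simp
    finally show ?thesis .
  qed
  have "B \<noteq> {}" using sgrpD(1)[OF assms(1)] assms(3) by blast
  thus ?thesis unfolding sgrp_def using cl as by blast
qed

lemma fsg_hom_image:
  assumes "fsg A m" "shom h A m B n" "h ` A = B"
  shows "fsg B n"
  using assms sgrp_hom_image unfolding fsg_def by blast

lemma shom_comp: "shom h A m B n \<Longrightarrow> shom k B n C p \<Longrightarrow> shom (k \<circ> h) A m C p"
  unfolding shom_def by auto

lemma iso_refl: "isomorphic A m A m"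
  unfolding isomorphic_def shom_def by (rule exI[of _ id]) auto

lemma iso_trans: "isomorphic A m B n \<Longrightarrow> isomorphic B n C p \<Longrightarrow> isomorphic A m C p"
  unfolding isomorphic_def using shom_comp bij_betw_trans by blast

lemma iso_sym: assumes "isomorphic A m B n" "sgrp A m" shows "isomorphic B n A m"
proof -
  obtain h where h: "shom h A m B n" "bij_betw h A B" using assms unfolding isomorphic_def by blast
  let ?g = "inv_into A h"
  have g: "bij_betw ?g B A" using h(2) by (rule bij_betw_inv_into)
  have gA: "?g x \<in> A" if "x \<in> B" for x using g that by (rule bij_betw_apply)
  have hg: "h (?g x) = x" if "x \<in> B" for x using h(2) that by (rule bij_betw_inv_into_right)
  have gh: "?g (h x) = x" if "x \<in> A" for x using h(2) that by (rule bij_betw_inv_into_left)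
  have hm: "h (m x y) = n (h x) (h y)" if "x \<in> A" "y \<in> A" for x y using h(1) that unfolding shom_def by blast
  have "?g (n x y) = m (?g x) (?g y)" if xy: "x \<in> B" "y \<in> B" for x y
  proof -
    have "m (?g x) (?g y) \<in> A" using gA xy sgrpD(2)[OF assms(2)] by blast
    hence "?g (h (m (?g x) (?g y))) = m (?g x) (?g y)" by (rule gh)
    moreover have "h (m (?g x) (?g y)) = n x y" using hm gA hg xy by simp
    ultimately show ?thesis by simp
  qed
  hence "shom ?g B n A m" unfolding shom_def using gA by blast
  thus ?thesis using g unfolding isomorphic_def by blast
qed

lemma iso_fsg: assumes "isomorphic A m B n" "fsg A m" shows "fsg B n"
  using assms fsg_hom_image unfolding isomorphic_def bij_betw_def by blast

lemma nat_copy: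
  assumes "fsg A m"
  shows "\<exists>(B::nat set) n. fsg B n \<and> isomorphic B n A m"
proof -
  have fin: "finite A" and sg: "sgrp A m" using assms unfolding fsg_def by auto
  obtain g where g: "bij_betw g {0..<card A} A" using ex_bij_betw_nat_finite[OF fin] by blast
  define B where "B = {0..<card A}"
  have gB: "bij_betw g B A" using g B_def by simp
  define n where "n = (\<lambda>x y. inv_into B g (m (g x) (g y)))"
  have gi: "bij_betw (inv_into B g) A B" using gB by (rule bij_betw_inv_into)
  have gA: "g x \<in> A" if "x \<in> B" for x using gB that by (rule bij_betw_apply)
  have giB: "inv_into B g x \<in> B" if "x \<in> A" for x using gi that by (rule bij_betw_apply)
  have gg: "g (inv_into B g x) = x" if "x \<in> A" for x using gB that by (rule bij_betw_inv_into_right)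
  have "inv_into B g (m x y) = n (inv_into B g x) (inv_into B g y)" if "x \<in> A" "y \<in> A" for x y
    unfolding n_def using gg that by simp
  hence "shom (inv_into B g) A m B n" unfolding shom_def using giB by blast
  hence iso1: "isomorphic A m B n" using gi unfolding isomorphic_def by blast
  hence "fsg B n" using iso_fsg assms by blast
  hence "isomorphic B n A m" using iso_sym iso1 sg by blast
  thus ?thesis using \<open>fsg B n\<close> by blast
qed



lemma pvD:
  assumes "pseudovariety V"
  shows "\<And>A m. (A, m) \<in> V \<Longrightarrow> fsg A m"
    "\<And>A m. fsg A m \<Longrightarrow> card A = 1 \<Longrightarrow> (A, m) \<in> V"
    "\<And>A m B n C p. (A, m) \<in> V \<Longrightarrow> (B, n) \<in> V \<Longrightarrow> fsg C p
          \<Longrightarrow> isomorphic (A \<times> B) (prod_mult m n) C p \<Longrightarrow> (C, p) \<in> V"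
    "\<And>A m B. (A, m) \<in> V \<Longrightarrow> B \<subseteq> A \<Longrightarrow> sgrp B m \<Longrightarrow> (B, m) \<in> V"
    "\<And>A m B n h. (A, m) \<in> V \<Longrightarrow> fsg B n \<Longrightarrow> shom h A m B n \<Longrightarrow> h ` A = B \<Longrightarrow> (B, n) \<in> V"
proof -
  note d = assms[unfolded pseudovariety_def]
  note d1 = conjunct1[OF d] and d2 = conjunct1[OF conjunct2[OF d]]
    and d3 = conjunct1[OF conjunct2[OF conjunct2[OF d]]]
    and d4 = conjunct1[OF conjunct2[OF conjunct2[OF conjunct2[OF d]]]]
    and d5 = conjunct2[OF conjunct2[OF conjunct2[OF conjunct2[OF d]]]]
  show "\<And>A m. (A, m) \<in> V \<Longrightarrow> fsg A m" using d1 by fast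
  show "\<And>A m. fsg A m \<Longrightarrow> card A = 1 \<Longrightarrow> (A, m) \<in> V" using d2 by simp
  show "\<And>A m B n C p. (A, m) \<in> V \<Longrightarrow> (B, n) \<in> V \<Longrightarrow> fsg C p
          \<Longrightarrow> isomorphic (A \<times> B) (prod_mult m n) C p \<Longrightarrow> (C, p) \<in> V"
    apply (rule d3[rule_format]) by (intro conjI)
  show "\<And>A m B. (A, m) \<in> V \<Longrightarrow> B \<subseteq> A \<Longrightarrow> sgrp B m \<Longrightarrow> (B, m) \<in> V"
    apply (rule d4[rule_format]) by (intro conjI)
  show "\<And>A m B n h. (A, m) \<in> V \<Longrightarrow> fsg B n \<Longrightarrow> shom h A m B n \<Longrightarrow> h ` A = B \<Longrightarrow> (B, n) \<in> V"
    apply (rule d5[rule_format]) by (intro conjI)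
qed

lemma membI: "(B, n) \<in> V \<Longrightarrow> isomorphic B n A m \<Longrightarrow> memb V A m"
  unfolding memb_def by blast

lemma membE: assumes "memb V A m" obtains B n where "(B, n) \<in> V" "isomorphic B n A m"
  using assms unfolding memb_def by blast

lemma memb_fsg: assumes "pseudovariety V" "memb V A m" shows "fsg A m"
proof -
  obtain B n where "(B, n) \<in> V" "isomorphic B n A m" using assms(2) by (rule membE)
  thus ?thesis using iso_fsg pvD(1)[OF assms(1)] by blast
qed

lemma memb_iso: assumes "memb V A m" "isomorphic A m B n" shows "memb V B n"
proof -
  obtain C p where "(C, p) \<in> V" "isomorphic C p A m" using assms(1) by (rule membE)
  thus ?thesis using iso_trans[OF _ assms(2)] membI by blast
qed

lemma memb_of_mem: "(A, m) \<in> V \<Longrightarrow> memb V A m"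
  using membI iso_refl by blast

lemma mem_of_memb: assumes "pseudovariety V" "memb V (A::nat set) m" shows "(A, m) \<in> V"
proof -
  obtain B n where B: "(B, n) \<in> V" "isomorphic B n A m" using assms(2) by (rule membE)
  obtain h where "shom h B n A m" "bij_betw h B A" using B(2) unfolding isomorphic_def by blast
  thus ?thesis using pvD(5)[OF assms(1) B(1) memb_fsg[OF assms]] unfolding bij_betw_def by blast
qed

lemma memb_hom:
  assumes V: "pseudovariety V" and mA: "memb V A m" and h: "shom h A m B n" "h ` A = B" and fB: "fsg B n"
  shows "memb V B n"
proof -
  obtain C p where C: "(C, p) \<in> V" "isomorphic C p A m" using mA by (rule membE)
  obtain g where g: "shom g C p A m" "bij_betw g C A" using C(2) unfolding isomorphic_def by blast
  obtain D q where D: "fsg D q" "isomorphic (D::nat set) q B n" using nat_copy[OF fB] by blast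
  have "isomorphic B n D q" using iso_sym D fB unfolding fsg_def by blast
  then obtain k where k: "shom k B n D q" "bij_betw k B D" unfolding isomorphic_def by blast
  have "shom (k \<circ> (h \<circ> g)) C p D q" using shom_comp[OF shom_comp[OF g(1) h(1)] k(1)] .
  hence "shom (k \<circ> h \<circ> g) C p D q" by (simp add: comp_assoc)
  moreover have "k ` (h ` (g ` C)) = D" using g(2) h(2) k(2) unfolding bij_betw_def by simp
  hence "(k \<circ> h \<circ> g) ` C = D" by (simp add: image_image)
  ultimately have "(D, q) \<in> V" using pvD(5)[OF V C(1) D(1)] by blast
  thus ?thesis using D(2) by (rule membI)
qed

lemma memb_sub:
  assumes V: "pseudovariety V" and mA: "memb V A m" and sub: "B \<subseteq> A" "sgrp B m"
  shows "memb V B m"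
proof -
  obtain C p where C: "(C, p) \<in> V" "isomorphic C p A m" using mA by (rule membE)
  obtain g where g: "shom g C p A m" "bij_betw g C A" using C(2) unfolding isomorphic_def by blast
  define C' where "C' = {c \<in> C. g c \<in> B}"
  have fC: "fsg C p" using pvD(1)[OF V C(1)] .
  have gC': "g ` C' = B" using g(2) sub(1) unfolding C'_def bij_betw_def by blast
  have "C' \<noteq> {}" using gC' sgrpD(1)[OF sub(2)] by blast
  moreover have "p x y \<in> C'" if "x \<in> C'" "y \<in> C'" for x y
  proof -
    have "p x y \<in> C" using that fC unfolding C'_def fsg_def sgrp_def by blast
    moreover have "g (p x y) = m (g x) (g y)" using that g(1) unfolding C'_def shom_def by blast
    hence "g (p x y) \<in> B" using that sgrpD(2)[OF sub(2)] unfolding C'_def by simp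
    ultimately show ?thesis unfolding C'_def by blast
  qed
  moreover have "\<forall>x\<in>C'. \<forall>y\<in>C'. \<forall>z\<in>C'. p (p x y) z = p x (p y z)" using fC unfolding C'_def fsg_def sgrp_def by blast
  ultimately have "sgrp C' p" unfolding sgrp_def by blast
  moreover have "C' \<subseteq> C" unfolding C'_def by blast
  ultimately have "(C', p) \<in> V" using pvD(4)[OF V C(1)] by blast
  moreover have "shom g C' p B m" using g(1) gC' unfolding shom_def C'_def by blast
  moreover have "inj_on g C'" using inj_on_subset[OF bij_betw_imp_inj_on[OF g(2)] \<open>C' \<subseteq> C\<close>] .
  hence "bij_betw g C' B" using gC' unfolding bij_betw_def by simp
  ultimately have "isomorphic C' p B m" unfolding isomorphic_def by blast
  thus ?thesis by (rule membI[OF \<open>(C', p) \<in> V\<close>])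
qed

lemma memb_div:
  assumes V: "pseudovariety V" and mA: "memb V A m" and sub: "U \<subseteq> A" "sgrp U m"
    and h: "shom h U m B n" "h ` U = B" and fB: "fsg B n"
  shows "memb V B n"
  using memb_hom[OF V memb_sub[OF V mA sub] h fB] .

lemma fsg_prod: assumes "fsg A m" "fsg B n" shows "fsg (A \<times> B) (prod_mult m n)"
proof -
  have a: "finite A" "sgrp A m" and b: "finite B" "sgrp B n" using assms unfolding fsg_def by auto
  have "A \<times> B \<noteq> {}" using sgrpD(1)[OF a(2)] sgrpD(1)[OF b(2)] by simp
  moreover have "prod_mult m n x y \<in> A \<times> B" if "x \<in> A \<times> B" "y \<in> A \<times> B" for x y
    using that sgrpD(2)[OF a(2)] sgrpD(2)[OF b(2)] unfolding prod_mult_def by (simp add: mem_Times_iff)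
  moreover have "prod_mult m n (prod_mult m n x y) z = prod_mult m n x (prod_mult m n y z)"
    if "x \<in> A \<times> B" "y \<in> A \<times> B" "z \<in> A \<times> B" for x y z
    using that sgrpD(3)[OF a(2)] sgrpD(3)[OF b(2)] unfolding prod_mult_def by (simp add: mem_Times_iff)
  ultimately show ?thesis unfolding fsg_def sgrp_def using a(1) b(1) by blast
qed

lemma memb_prod:
  assumes V: "pseudovariety V" and mA: "memb V A m" and mB: "memb V B n"
  shows "memb V (A \<times> B) (prod_mult m n)"
proof -
  obtain C p where C: "(C, p) \<in> V" "isomorphic C p A m" using mA by (rule membE)
  obtain g where g: "shom g C p A m" "bij_betw g C A" using C(2) unfolding isomorphic_def by blast
  obtain D q where D: "(D, q) \<in> V" "isomorphic D q B n" using mB by (rule membE)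
  obtain k where k: "shom k D q B n" "bij_betw k D B" using D(2) unfolding isomorphic_def by blast
  have fAB: "fsg (A \<times> B) (prod_mult m n)" using fsg_prod[OF memb_fsg[OF V mA] memb_fsg[OF V mB]] .
  obtain E r where E: "fsg E r" "isomorphic (E::nat set) r (A \<times> B) (prod_mult m n)" using nat_copy[OF fAB] by blast
  have "isomorphic (C \<times> D) (prod_mult p q) (A \<times> B) (prod_mult m n)"
  proof -
    have "shom (map_prod g k) (C \<times> D) (prod_mult p q) (A \<times> B) (prod_mult m n)"
      unfolding shom_def
    proof (intro conjI ballI)
      fix x assume "x \<in> C \<times> D" thus "map_prod g k x \<in> A \<times> B" using g(1) k(1) unfolding shom_def by (cases x) simp
    next
      fix x y assume "x \<in> C \<times> D" "y \<in> C \<times> D"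
      thus "map_prod g k (prod_mult p q x y) = prod_mult m n (map_prod g k x) (map_prod g k y)"
        using g(1) k(1) unfolding shom_def prod_mult_def by (cases x, cases y) simp
    qed
    moreover have "bij_betw (map_prod g k) (C \<times> D) (A \<times> B)" using g(2) k(2) by (rule bij_betw_map_prod)
    ultimately show ?thesis unfolding isomorphic_def by blast
  qed
  moreover have "isomorphic (A \<times> B) (prod_mult m n) E r" using iso_sym E fAB unfolding fsg_def by blast
  ultimately have "isomorphic (C \<times> D) (prod_mult p q) E r" by (rule iso_trans)
  hence "(E, r) \<in> V" using pvD(3)[OF V C(1) D(1) E(1)] by blast
  thus ?thesis using E(2) by (rule membI)
qed

lemma memb_triv:
  assumes V: "pseudovariety V" and fB: "fsg B n" and c: "card B = 1"
  shows "memb V B n"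
proof -
  obtain b where b: "B = {b}" using c card_1_singletonE by blast
  have nb: "n b b = b" using fB b unfolding fsg_def sgrp_def by blast
  have f0: "fsg {0::nat} (\<lambda>_ _. 0)" unfolding fsg_def sgrp_def by simp
  hence "({0::nat}, \<lambda>_ _. 0) \<in> V" using pvD(2)[OF V] by simp
  moreover have "isomorphic {0::nat} (\<lambda>_ _. 0) B n" unfolding isomorphic_def shom_def
    using b nb by (intro exI[of _ "\<lambda>_. b"]) (simp add: bij_betw_def)
  ultimately show ?thesis by (rule membI)
qed

definition FIN :: "nsg set" where "FIN = {(A, m). fsg A m}"

lemma pv_FIN: "pseudovariety FIN"
  unfolding pseudovariety_def FIN_def fsg_def by (auto intro: finite_subset)

lemma memb_FIN: "fsg A m \<Longrightarrow> memb FIN A m"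
  using nat_copy unfolding memb_def FIN_def by fast

lemma pv_Inter: assumes "\<W> \<noteq> {}" "\<forall>W\<in>\<W>. pseudovariety W" shows "pseudovariety (\<Inter>\<W>)"
proof -
  have a: "\<And>W. W \<in> \<W> \<Longrightarrow> pseudovariety W" using assms by blast
  obtain W0 where W0: "W0 \<in> \<W>" using assms by blast
  have c1: "\<forall>(A, m)\<in>\<Inter>\<W>. fsg A m"
  proof
    fix x assume "x \<in> \<Inter>\<W>" hence "x \<in> W0" using W0 by blast
    thus "case x of (A, m) \<Rightarrow> fsg A m" using pvD(1)[OF a[OF W0]] by (cases x) simp
  qed
  have c2: "(A, m) \<in> \<Inter>\<W>" if "fsg A m" "card A = 1" for A m
  proof (rule InterI)
    fix W assume W: "W \<in> \<W>" show "(A, m) \<in> W" by (rule pvD(2)[OF a[OF W] that])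
  qed
  have c3: "(C, p) \<in> \<Inter>\<W>" if "(A, m) \<in> \<Inter> \<W>" "(B, n) \<in> \<Inter> \<W>" "fsg C p" "isomorphic (A \<times> B) (prod_mult m n) C p" for A B C m n p
  proof (rule InterI)
    fix W assume W: "W \<in> \<W>"
    have "(A, m) \<in> W" "(B, n) \<in> W" using that(1,2) W by blast+
    thus "(C, p) \<in> W" using pvD(3)[OF a[OF W] _ _ that(3,4)] by blast
  qed
  have c4: "(B, m) \<in> \<Inter>\<W>" if "(A, m) \<in> \<Inter> \<W>" "B \<subseteq> A" "sgrp B m" for A B m
  proof (rule InterI)
    fix W assume W: "W \<in> \<W>"
    have "(A, m) \<in> W" using that(1) W by blast
    thus "(B, m) \<in> W" using pvD(4)[OF a[OF W] _ that(2,3)] by blast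
  qed
  have c5: "(B, n) \<in> \<Inter>\<W>" if "(A, m) \<in> \<Inter> \<W>" "fsg B n" "shom h A m B n" "h ` A = B" for A B m n h
  proof (rule InterI)
    fix W assume W: "W \<in> \<W>"
    have "(A, m) \<in> W" using that(1) W by blast
    thus "(B, n) \<in> W" using pvD(5)[OF a[OF W] _ that(2,3,4)] by blast
  qed
  show ?thesis unfolding pseudovariety_def
    apply (intro conjI allI impI)
        apply (rule c1)
       apply (erule conjE, erule (1) c2)
      apply (elim conjE, erule (3) c3)
     apply (elim conjE, erule (2) c4)
    apply (elim conjE, erule (3) c5)
    done
qed

definition allfsg :: "('a set \<times> ('a \<Rightarrow> 'a \<Rightarrow> 'a)) set \<Rightarrow> bool" where
  "allfsg K \<longleftrightarrow> (\<forall>(A, m)\<in>K. fsg A m)"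

lemma pv_gen_pv: assumes "allfsg K" shows "pseudovariety (pv_gen K)"
  unfolding pv_gen_def
proof (rule pv_Inter)
  have "FIN \<in> {V. pseudovariety V \<and> (\<forall>(A, m)\<in>K. memb V A m)}"
    using pv_FIN memb_FIN assms unfolding allfsg_def by fastforce
  thus "{V. pseudovariety V \<and> (\<forall>(A, m)\<in>K. memb V A m)} \<noteq> {}" by blast
qed auto

lemma pv_gen_least: "pseudovariety W \<Longrightarrow> (\<And>A m. (A, m) \<in> K \<Longrightarrow> memb W A m) \<Longrightarrow> pv_gen K \<subseteq> W"
  unfolding pv_gen_def by blast

lemma pv_gen_mono: "K \<subseteq> K' \<Longrightarrow> pv_gen K \<subseteq> pv_gen K'"
  unfolding pv_gen_def by blast

lemma pv_gen_memb: assumes "allfsg K" "(A, m) \<in> K" shows "memb (pv_gen K) A m"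
proof -
  have fA: "fsg A m" using assms unfolding allfsg_def by blast
  obtain B n where B: "fsg B n" "isomorphic (B::nat set) n A m" using nat_copy[OF fA] by blast
  have "(B, n) \<in> W" if W: "pseudovariety W" "\<forall>(A, m)\<in>K. memb W A m" for W
  proof -
    have "memb W A m" using W(2) assms(2) by blast
    moreover have "isomorphic A m B n" using iso_sym B fA unfolding fsg_def by blast
    ultimately have "memb W B n" by (rule memb_iso)
    thus ?thesis using mem_of_memb W(1) by blast
  qed
  hence "(B, n) \<in> pv_gen K" unfolding pv_gen_def by blast
  thus ?thesis using B(2) by (rule membI)
qed

lemma pv_gen_of_pv: assumes "pseudovariety V" shows "pv_gen V = V"
proof
  show "pv_gen V \<subseteq> V" by (rule pv_gen_least[OF assms memb_of_mem])
  show "V \<subseteq> pv_gen V" unfolding pv_gen_def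
  proof (intro subsetI InterI)
    fix x W assume x: "x \<in> V" and W: "W \<in> {W. pseudovariety W \<and> (\<forall>(A, m)\<in>V. memb W A m)}"
    obtain A m where xx: "x = (A, m)" by (cases x)
    have AV: "(A, m) \<in> V" using x xx by simp
    have pW: "pseudovariety W" and aW: "\<forall>(A, m)\<in>V. memb W A m" using W by simp_all
    from bspec[OF aW AV] have "memb W A m" by simp
    hence "(A, m) \<in> W" by (rule mem_of_memb[OF pW])
    thus "x \<in> W" using xx by simp
  qed
qed



definition Tr :: "'a set \<Rightarrow> ('a \<Rightarrow> 'a) set \<Rightarrow> ('a \<Rightarrow> 'a) set" where
  "Tr X F = F \<union> (\<lambda>c. restrict (\<lambda>_. c) X) ` X"

definition trm :: "'a set \<Rightarrow> ('a \<Rightarrow> 'a) \<Rightarrow> ('a \<Rightarrow> 'a) \<Rightarrow> ('a \<Rightarrow> 'a)" where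
  "trm X f g = restrict (g \<circ> f) X"

definition tclosed :: "'a set \<Rightarrow> ('a \<Rightarrow> 'a) set \<Rightarrow> bool" where
  "tclosed X F \<longleftrightarrow> F \<subseteq> X \<rightarrow>\<^sub>E X \<and> (\<forall>f\<in>F. \<forall>g\<in>F. trm X f g \<in> F)"

lemma trm_app: "x \<in> X \<Longrightarrow> trm X f g x = g (f x)"
  unfolding trm_def by simp

lemma trm_out: "x \<notin> X \<Longrightarrow> trm X f g x = undefined"
  unfolding trm_def by simp

lemma trm_ext: "trm X f g \<in> extensional X"
  unfolding trm_def by simp

lemma ext_eqI: "f \<in> extensional X \<Longrightarrow> g \<in> extensional X \<Longrightarrow> (\<And>x. x \<in> X \<Longrightarrow> f x = g x) \<Longrightarrow> f = g"
  by (rule extensionalityI)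

lemma const_in: "c \<in> X \<Longrightarrow> restrict (\<lambda>_. c) X \<in> X \<rightarrow>\<^sub>E X"
  by simp

lemma Tr_sub: assumes "tclosed X F" shows "Tr X F \<subseteq> X \<rightarrow>\<^sub>E X"
  using assms unfolding tclosed_def Tr_def by auto

lemma trm_PiE: "f \<in> X \<rightarrow>\<^sub>E X \<Longrightarrow> g \<in> X \<rightarrow>\<^sub>E X \<Longrightarrow> trm X f g \<in> X \<rightarrow>\<^sub>E X"
  unfolding trm_def by auto

lemma trm_const_right: "f \<in> X \<rightarrow>\<^sub>E X \<Longrightarrow> trm X f (restrict (\<lambda>_. c) X) = restrict (\<lambda>_. c) X"
  unfolding trm_def by (rule ext) auto

lemma trm_const_left: "c \<in> X \<Longrightarrow> trm X (restrict (\<lambda>_. c) X) g = restrict (\<lambda>_. g c) X"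
  unfolding trm_def by (rule ext) auto

lemma trm_assoc: "f \<in> X \<rightarrow>\<^sub>E X \<Longrightarrow> g \<in> X \<rightarrow>\<^sub>E X \<Longrightarrow> trm X (trm X f g) h = trm X f (trm X g h)"
  unfolding trm_def by (rule ext) auto

lemma Tr_closed:
  assumes "tclosed X F" "f \<in> Tr X F" "g \<in> Tr X F" shows "trm X f g \<in> Tr X F"
proof -
  have fX: "f \<in> X \<rightarrow>\<^sub>E X" and gX: "g \<in> X \<rightarrow>\<^sub>E X" using Tr_sub[OF assms(1)] assms(2,3) by blast+
  show ?thesis
  proof (cases "g \<in> F")
    case gF: True
    show ?thesis
    proof (cases "f \<in> F")
      case True thus ?thesis using gF assms(1) unfolding tclosed_def Tr_def by blast
    next
      case False
      then obtain c where c: "c \<in> X" "f = restrict (\<lambda>_. c) X" using assms(2) unfolding Tr_def by blast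
      have "trm X f g = restrict (\<lambda>_. g c) X" using c trm_const_left by simp
      moreover have "g c \<in> X" using gX c(1) by auto
      ultimately show ?thesis unfolding Tr_def by blast
    qed
  next
    case False
    then obtain c where c: "c \<in> X" "g = restrict (\<lambda>_. c) X" using assms(3) unfolding Tr_def by blast
    have "trm X f g = g" using c trm_const_right[OF fX] by simp
    thus ?thesis using assms(3) by simp
  qed
qed

lemma Tr_fsg:
  assumes "finite X" "X \<noteq> {}" "tclosed X F" shows "fsg (Tr X F) (trm X)"
proof -
  have "finite (X \<rightarrow>\<^sub>E X)" using assms(1) by (intro finite_PiE)
  hence fin: "finite (Tr X F)" using Tr_sub[OF assms(3)] finite_subset by blast
  obtain c where "c \<in> X" using assms(2) by blast
  hence "Tr X F \<noteq> {}" unfolding Tr_def by blast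
  moreover have "\<forall>x\<in>Tr X F. \<forall>y\<in>Tr X F. \<forall>z\<in>Tr X F. trm X (trm X x y) z = trm X x (trm X y z)"
  proof (intro ballI)
    fix x y z assume "x \<in> Tr X F" "y \<in> Tr X F" "z \<in> Tr X F"
    hence "x \<in> X \<rightarrow>\<^sub>E X" "y \<in> X \<rightarrow>\<^sub>E X" using Tr_sub[OF assms(3)] by blast+
    thus "trm X (trm X x y) z = trm X x (trm X y z)" by (rule trm_assoc)
  qed
  moreover have "\<forall>x\<in>Tr X F. \<forall>y\<in>Tr X F. trm X x y \<in> Tr X F" using Tr_closed[OF assms(3)] by blast
  ultimately show ?thesis unfolding fsg_def sgrp_def using fin by blast
qed



lemma bar_carrier_Tr: "bar_carrier A m = Tr (Sdot A m) (rmul A m ` A)"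
  unfolding bar_carrier_def Tr_def cst_def by simp

lemma bar_mult_trm: "bar_mult A m = trm (Sdot A m)"
  unfolding bar_mult_def trm_def by (intro ext) simp

lemma Some_in_Sdot: "Some a \<in> Sdot A m \<longleftrightarrow> a \<in> A"
  unfolding Sdot_def by auto

lemma None_in_Sdot: "None \<in> Sdot A m \<longleftrightarrow> \<not> is_monoid A m"
  unfolding Sdot_def by auto

lemma Sdot_cases: "x \<in> Sdot A m \<Longrightarrow> (x = None \<Longrightarrow> P) \<Longrightarrow> (\<And>a. a \<in> A \<Longrightarrow> x = Some a \<Longrightarrow> P) \<Longrightarrow> P"
  unfolding Sdot_def by (cases x) (auto split: if_splits)

lemma finite_Sdot: "finite A \<Longrightarrow> finite (Sdot A m)"
  unfolding Sdot_def by simp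

lemma Sdot_ne: "A \<noteq> {} \<Longrightarrow> Sdot A m \<noteq> {}"
  unfolding Sdot_def by simp

definition one :: "'a set \<Rightarrow> ('a \<Rightarrow> 'a \<Rightarrow> 'a) \<Rightarrow> 'a option" where
  "one A m = (if is_monoid A m then Some (SOME e. e \<in> A \<and> (\<forall>x\<in>A. m e x = x \<and> m x e = x)) else None)"

lemma one_props:
  shows "one A m \<in> Sdot A m" "\<And>s. s \<in> A \<Longrightarrow> dmult m (one A m) (Some s) = Some s"
    "\<And>s. s \<in> A \<Longrightarrow> dmult m (Some s) (one A m) = Some s"
proof -
  have "one A m \<in> Sdot A m \<and> (\<forall>s\<in>A. dmult m (one A m) (Some s) = Some s \<and> dmult m (Some s) (one A m) = Some s)"
  proof (cases "is_monoid A m")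
    case True
    let ?e = "SOME e. e \<in> A \<and> (\<forall>x\<in>A. m e x = x \<and> m x e = x)"
    have "\<exists>e. e \<in> A \<and> (\<forall>x\<in>A. m e x = x \<and> m x e = x)" using True unfolding is_monoid_def by blast
    hence e: "?e \<in> A \<and> (\<forall>x\<in>A. m ?e x = x \<and> m x ?e = x)" by (rule someI_ex)
    have "one A m = Some ?e" using True unfolding one_def by simp
    thus ?thesis using e by (simp add: Some_in_Sdot)
  next
    case False
    hence "one A m = None" unfolding one_def by simp
    thus ?thesis using False by (simp add: None_in_Sdot)
  qed
  thus "one A m \<in> Sdot A m" "\<And>s. s \<in> A \<Longrightarrow> dmult m (one A m) (Some s) = Some s"
    "\<And>s. s \<in> A \<Longrightarrow> dmult m (Some s) (one A m) = Some s" by blast+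
qed

lemma one_None: "\<not> is_monoid A m \<Longrightarrow> one A m = None"
  unfolding one_def by simp

lemma rmul_app: "x \<in> Sdot A m \<Longrightarrow> rmul A m s x = dmult m x (Some s)"
  unfolding rmul_def by simp

lemma rmul_ext: "rmul A m s \<in> extensional (Sdot A m)"
  unfolding rmul_def by simp

lemma dmult_in: assumes "sgrp A m" "x \<in> Sdot A m" "s \<in> A" shows "dmult m x (Some s) \<in> Sdot A m"
  using assms(2)
proof (rule Sdot_cases)
  assume "x = None" thus ?thesis using assms(3) by (simp add: Some_in_Sdot)
next
  fix a assume "a \<in> A" "x = Some a" thus ?thesis using assms(1,3) sgrpD(2) by (simp add: Some_in_Sdot)
qed

lemma rmul_PiE: assumes "sgrp A m" "s \<in> A" shows "rmul A m s \<in> Sdot A m \<rightarrow>\<^sub>E Sdot A m"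
proof -
  have "\<forall>x\<in>Sdot A m. rmul A m s x \<in> Sdot A m" using dmult_in[OF assms(1) _ assms(2)] by (simp add: rmul_app)
  thus ?thesis using rmul_ext[of A m s] by (simp add: PiE_iff)
qed

lemma rmul_mult: assumes "sgrp A m" "s \<in> A" "t \<in> A"
  shows "trm (Sdot A m) (rmul A m s) (rmul A m t) = rmul A m (m s t)"
proof (rule ext_eqI[OF trm_ext rmul_ext])
  fix x assume x: "x \<in> Sdot A m"
  have "trm (Sdot A m) (rmul A m s) (rmul A m t) x = dmult m (dmult m x (Some s)) (Some t)"
    using x dmult_in[OF assms(1) x assms(2)] by (simp add: trm_app rmul_app)
  also have "\<dots> = dmult m x (Some (m s t))"
    using x
  proof (rule Sdot_cases)
    assume "x = None" thus ?thesis by simp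
  next
    fix a assume "a \<in> A" "x = Some a" thus ?thesis using sgrpD(3)[OF assms(1)] assms(2,3) by simp
  qed
  also have "\<dots> = rmul A m (m s t) x" using x by (simp add: rmul_app)
  finally show "trm (Sdot A m) (rmul A m s) (rmul A m t) x = rmul A m (m s t) x" .
qed

lemma tclosed_rmul: assumes "sgrp A m" shows "tclosed (Sdot A m) (rmul A m ` A)"
  unfolding tclosed_def
proof (intro conjI ballI subsetI)
  fix f assume "f \<in> rmul A m ` A" thus "f \<in> Sdot A m \<rightarrow>\<^sub>E Sdot A m" using rmul_PiE[OF assms] by blast
next
  fix f g assume "f \<in> rmul A m ` A" "g \<in> rmul A m ` A"
  then obtain s t where "s \<in> A" "t \<in> A" "f = rmul A m s" "g = rmul A m t" by blast
  thus "trm (Sdot A m) f g \<in> rmul A m ` A" using rmul_mult[OF assms] sgrpD(2)[OF assms] by simp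
qed

lemma fsg_bar: assumes "fsg A m" shows "fsg (bar_carrier A m) (bar_mult A m)"
proof -
  have a: "finite A" "sgrp A m" using assms unfolding fsg_def by auto
  show ?thesis unfolding bar_carrier_Tr bar_mult_trm
    by (rule Tr_fsg[OF finite_Sdot[OF a(1)] Sdot_ne[OF sgrpD(1)[OF a(2)]] tclosed_rmul[OF a(2)]])
qed

lemma rmul_one: assumes "s \<in> A" shows "rmul A m s (one A m) = Some s"
proof -
  have "rmul A m s (one A m) = dmult m (one A m) (Some s)" by (rule rmul_app[OF one_props(1)])
  also have "\<dots> = Some s" by (rule one_props(2)[OF assms])
  finally show ?thesis .
qed

lemma memb_of_bar:
  assumes V: "pseudovariety V" and mb: "memb V (bar_carrier A m) (bar_mult A m)" and f: "fsg A m"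
  shows "memb V A m"
proof -
  have sg: "sgrp A m" using f unfolding fsg_def by simp
  let ?U = "rmul A m ` A"
  let ?h = "\<lambda>f. the (f (one A m))"
  have U: "?U \<subseteq> bar_carrier A m" unfolding bar_carrier_Tr Tr_def by blast
  have hs: "?h (rmul A m s) = s" if "s \<in> A" for s using rmul_one[OF that] by simp
  have "sgrp ?U (trm (Sdot A m))" unfolding sgrp_def
  proof (intro conjI ballI)
    show "?U \<noteq> {}" using sgrpD(1)[OF sg] by simp
  next
    fix f g assume "f \<in> ?U" "g \<in> ?U"
    then obtain s t where "s \<in> A" "t \<in> A" "f = rmul A m s" "g = rmul A m t" by blast
    thus "trm (Sdot A m) f g \<in> ?U" using rmul_mult[OF sg] sgrpD(2)[OF sg] by simp
  next
    fix f g k assume "f \<in> ?U" "g \<in> ?U" "k \<in> ?U"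
    hence "f \<in> Sdot A m \<rightarrow>\<^sub>E Sdot A m" "g \<in> Sdot A m \<rightarrow>\<^sub>E Sdot A m" using rmul_PiE[OF sg] by blast+
    thus "trm (Sdot A m) (trm (Sdot A m) f g) k = trm (Sdot A m) f (trm (Sdot A m) g k)" by (rule trm_assoc)
  qed
  moreover have "shom ?h ?U (trm (Sdot A m)) A m" unfolding shom_def
  proof (intro conjI ballI)
    fix f assume "f \<in> ?U" thus "?h f \<in> A" using hs by auto
  next
    fix f g assume "f \<in> ?U" "g \<in> ?U"
    then obtain s t where st: "s \<in> A" "t \<in> A" "f = rmul A m s" "g = rmul A m t" by blast
    have "m s t \<in> A" using st sgrpD(2)[OF sg] by blast
    thus "?h (trm (Sdot A m) f g) = m (?h f) (?h g)" using st rmul_mult[OF sg] hs by simp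
  qed
  moreover have "?h ` ?U = A" using hs by (auto simp: image_image)
  ultimately show ?thesis using memb_div[OF V mb[unfolded bar_mult_trm] U] f by blast
qed



lemma Tr_const: "c \<in> X \<Longrightarrow> restrict (\<lambda>_. c) X \<in> Tr X F"
  unfolding Tr_def by blast

lemma tr_div:
  assumes V: "pseudovariety W" and mb: "memb W (Tr X' F') (trm X')"
   and cF': "tclosed X' F'" and XN: "X \<noteq> {}" and fX: "finite X" and cF: "tclosed X F"
   and Y: "Y \<subseteq> X'" and pi: "\<pi> ` Y = X"
   and cov: "\<And>f. f \<in> F \<Longrightarrow> \<exists>f'\<in>Tr X' F'. \<forall>y\<in>Y. f' y \<in> Y \<and> \<pi> (f' y) = f (\<pi> y)"
  shows "memb W (Tr X F) (trm X)"
proof -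
  define sel where "sel x = (SOME y. y \<in> Y \<and> \<pi> y = x)" for x
  have sel: "sel x \<in> Y \<and> \<pi> (sel x) = x" if "x \<in> X" for x
  proof -
    have "\<exists>y. y \<in> Y \<and> \<pi> y = x" using that pi by blast
    thus ?thesis unfolding sel_def by (rule someI_ex)
  qed
  define \<Phi> where "\<Phi> g = restrict (\<lambda>x. \<pi> (g (sel x))) X" for g
  define U0 where "U0 = {g \<in> Tr X' F'. (\<forall>y\<in>Y. g y \<in> Y) \<and> (\<forall>y\<in>Y. \<forall>y'\<in>Y. \<pi> y = \<pi> y' \<longrightarrow> \<pi> (g y) = \<pi> (g y'))}"
  define U where "U = {g \<in> U0. \<Phi> g \<in> Tr X F}"
  have U0D: "g \<in> Tr X' F'" "\<And>y. y \<in> Y \<Longrightarrow> g y \<in> Y" "\<And>y y'. y \<in> Y \<Longrightarrow> y' \<in> Y \<Longrightarrow> \<pi> y = \<pi> y' \<Longrightarrow> \<pi> (g y) = \<pi> (g y')"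
    if "g \<in> U0" for g using that unfolding U0_def by blast+
  have piX: "\<pi> y \<in> X" if "y \<in> Y" for y using that pi by blast
  have a: "\<Phi> g (\<pi> y) = \<pi> (g y)" if "g \<in> U0" "y \<in> Y" for g y
  proof -
    have "\<Phi> g (\<pi> y) = \<pi> (g (sel (\<pi> y)))" unfolding \<Phi>_def using piX[OF that(2)] by simp
    also have "\<dots> = \<pi> (g y)" using U0D(3)[OF that(1)] sel[OF piX[OF that(2)]] that(2) by blast
    finally show ?thesis .
  qed
  have b: "trm X' g h \<in> U0" if "g \<in> U0" "h \<in> U0" for g h
  proof -
    have "trm X' g h \<in> Tr X' F'" using Tr_closed[OF cF' U0D(1)[OF that(1)] U0D(1)[OF that(2)]] .
    moreover have tt: "trm X' g h y = h (g y)" if "y \<in> Y" for y using that Y by (simp add: trm_app subset_iff)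
    moreover have "\<forall>y\<in>Y. h (g y) \<in> Y" using U0D(2)[OF that(1)] U0D(2)[OF that(2)] by blast
    hence "\<forall>y\<in>Y. trm X' g h y \<in> Y" using tt by simp
    moreover have "\<forall>y\<in>Y. \<forall>y'\<in>Y. \<pi> y = \<pi> y' \<longrightarrow> \<pi> (trm X' g h y) = \<pi> (trm X' g h y')"
    proof (intro ballI impI)
      fix y y' assume yy: "y \<in> Y" "y' \<in> Y" "\<pi> y = \<pi> y'"
      have "\<pi> (g y) = \<pi> (g y')" by (rule U0D(3)[OF that(1) yy])
      hence "\<pi> (h (g y)) = \<pi> (h (g y'))" by (rule U0D(3)[OF that(2) U0D(2)[OF that(1) yy(1)] U0D(2)[OF that(1) yy(2)]])
      thus "\<pi> (trm X' g h y) = \<pi> (trm X' g h y')" using tt yy by simp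
    qed
    ultimately show ?thesis unfolding U0_def mem_Collect_eq by blast
  qed
  have c: "\<Phi> (trm X' g h) = trm X (\<Phi> g) (\<Phi> h)" if "g \<in> U0" "h \<in> U0" for g h
  proof (rule ext_eqI)
    show "\<Phi> (trm X' g h) \<in> extensional X" unfolding \<Phi>_def by simp
    show "trm X (\<Phi> g) (\<Phi> h) \<in> extensional X" by (rule trm_ext)
    fix x assume x: "x \<in> X"
    have sx: "sel x \<in> Y" using sel[OF x] by blast
    have gs: "g (sel x) \<in> Y" using U0D(2)[OF that(1) sx] .
    have "\<Phi> (trm X' g h) x = \<pi> (h (g (sel x)))" unfolding \<Phi>_def using x sx Y trm_app[of "sel x" X' g h] by auto
    also have "\<dots> = \<Phi> h (\<pi> (g (sel x)))" using a[OF that(2) gs] by simp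
    also have "\<pi> (g (sel x)) = \<Phi> g x" unfolding \<Phi>_def using x by simp
    also have "\<Phi> h (\<Phi> g x) = trm X (\<Phi> g) (\<Phi> h) x" using x trm_app by metis
    finally show "\<Phi> (trm X' g h) x = trm X (\<Phi> g) (\<Phi> h) x" .
  qed
  have d: "trm X' g h \<in> U" if "g \<in> U" "h \<in> U" for g h
  proof -
    have "g \<in> U0" "h \<in> U0" "\<Phi> g \<in> Tr X F" "\<Phi> h \<in> Tr X F" using that unfolding U_def by blast+
    thus ?thesis unfolding U_def using b c Tr_closed[OF cF] by simp
  qed
  have FX: "F \<subseteq> X \<rightarrow>\<^sub>E X" using cF unfolding tclosed_def by blast
  have e: "f \<in> \<Phi> ` U" if fF: "f \<in> F" for f
  proof -
    obtain f' where f': "f' \<in> Tr X' F'" "\<forall>y\<in>Y. f' y \<in> Y \<and> \<pi> (f' y) = f (\<pi> y)" using cov[OF fF] by blast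
    have "f' \<in> U0" unfolding U0_def using f' by auto
    moreover have "\<Phi> f' = f"
    proof (rule ext_eqI)
      show "\<Phi> f' \<in> extensional X" unfolding \<Phi>_def by simp
      show "f \<in> extensional X" using subsetD[OF FX fF] by (simp add: PiE_iff)
      fix x assume x: "x \<in> X"
      have "\<Phi> f' x = \<pi> (f' (sel x))" unfolding \<Phi>_def using x by simp
      also have "\<dots> = f (\<pi> (sel x))" using f'(2) sel[OF x] by blast
      also have "\<dots> = f x" using sel[OF x] by simp
      finally show "\<Phi> f' x = f x" .
    qed
    moreover have "f \<in> Tr X F" using fF unfolding Tr_def by blast
    ultimately have "f' \<in> U" unfolding U_def by simp
    thus ?thesis using \<open>\<Phi> f' = f\<close> by (metis imageI)
  qed
  have f: "restrict (\<lambda>_. x) X \<in> \<Phi> ` U" if x: "x \<in> X" for x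
  proof -
    let ?c = "restrict (\<lambda>_. sel x) X'"
    have sx: "sel x \<in> Y" "\<pi> (sel x) = x" using sel[OF x] by blast+
    have "sel x \<in> X'" using sx(1) Y by blast
    hence "?c \<in> Tr X' F'" by (rule Tr_const)
    moreover have "\<forall>y\<in>Y. ?c y = sel x" using Y by auto
    ultimately have cU0: "?c \<in> U0" unfolding U0_def using sx by simp
    have "\<Phi> ?c = restrict (\<lambda>_. x) X"
    proof (rule ext_eqI)
      show "\<Phi> ?c \<in> extensional X" unfolding \<Phi>_def by simp
      show "restrict (\<lambda>_. x) X \<in> extensional X" by simp
      fix z assume z: "z \<in> X"
      have "sel z \<in> X'" using sel[OF z] Y by blast
      thus "\<Phi> ?c z = restrict (\<lambda>_. x) X z" unfolding \<Phi>_def using z sx by simp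
    qed
    moreover have "restrict (\<lambda>_. x) X \<in> Tr X F" using x by (rule Tr_const)
    ultimately have "?c \<in> U" unfolding U_def using cU0 by simp
    thus ?thesis using \<open>\<Phi> ?c = restrict (\<lambda>_. x) X\<close> by (metis imageI)
  qed
  have img: "\<Phi> ` U = Tr X F"
  proof
    show "\<Phi> ` U \<subseteq> Tr X F" unfolding U_def by blast
    show "Tr X F \<subseteq> \<Phi> ` U"
    proof
      fix g assume "g \<in> Tr X F"
      thus "g \<in> \<Phi> ` U" unfolding Tr_def using e f by blast
    qed
  qed
  have UT: "U \<subseteq> Tr X' F'" unfolding U_def U0_def by blast
  have sgU: "sgrp U (trm X')" unfolding sgrp_def
  proof (intro conjI ballI)
    obtain x0 where "x0 \<in> X" using XN by blast
    hence "restrict (\<lambda>_. x0) X \<in> Tr X F" by (rule Tr_const)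
    thus "U \<noteq> {}" using img by auto
  next
    fix g h assume "g \<in> U" "h \<in> U" thus "trm X' g h \<in> U" by (rule d)
  next
    fix g h k assume "g \<in> U" "h \<in> U" "k \<in> U"
    hence "g \<in> X' \<rightarrow>\<^sub>E X'" "h \<in> X' \<rightarrow>\<^sub>E X'" using UT Tr_sub[OF cF'] by blast+
    thus "trm X' (trm X' g h) k = trm X' g (trm X' h k)" by (rule trm_assoc)
  qed
  have hom: "shom \<Phi> U (trm X') (Tr X F) (trm X)" unfolding shom_def
  proof (intro conjI ballI)
    fix g assume "g \<in> U" thus "\<Phi> g \<in> Tr X F" unfolding U_def by blast
  next
    fix g h assume "g \<in> U" "h \<in> U" thus "\<Phi> (trm X' g h) = trm X (\<Phi> g) (\<Phi> h)" using c unfolding U_def by blast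
  qed
  have fT: "fsg (Tr X F) (trm X)" by (rule Tr_fsg[OF fX XN cF])
  show ?thesis by (rule memb_div[OF V mb UT sgU hom img fT])
qed

lemma tr_div_emb:
  assumes V: "pseudovariety W" and mb: "memb W (Tr X' F') (trm X')"
   and cF': "tclosed X' F'" and XN: "X \<noteq> {}" and fX: "finite X" and cF: "tclosed X F"
   and inj: "inj_on \<iota> X" and iX: "\<iota> ` X \<subseteq> X'"
   and cov: "\<And>f. f \<in> F \<Longrightarrow> \<exists>f'\<in>Tr X' F'. \<forall>x\<in>X. f' (\<iota> x) = \<iota> (f x)"
  shows "memb W (Tr X F) (trm X)"
proof (rule tr_div[OF V mb cF' XN fX cF iX])
  show "inv_into X \<iota> ` \<iota> ` X = X" using inj by simp
  fix f assume f: "f \<in> F"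
  obtain f' where f': "f' \<in> Tr X' F'" "\<forall>x\<in>X. f' (\<iota> x) = \<iota> (f x)" using cov[OF f] by blast
  have fX: "f x \<in> X" if "x \<in> X" for x using f that cF unfolding tclosed_def by blast
  have "\<forall>y\<in>\<iota> ` X. f' y \<in> \<iota> ` X \<and> inv_into X \<iota> (f' y) = f (inv_into X \<iota> y)"
  proof
    fix y assume "y \<in> \<iota> ` X"
    then obtain x where x: "x \<in> X" "y = \<iota> x" by blast
    have "f' y = \<iota> (f x)" using f'(2) x by simp
    moreover have "inv_into X \<iota> (\<iota> (f x)) = f x" using inj fX[OF x(1)] by simp
    moreover have "inv_into X \<iota> y = x" using inj x by simp
    ultimately show "f' y \<in> \<iota> ` X \<and> inv_into X \<iota> (f' y) = f (inv_into X \<iota> y)" using fX[OF x(1)] by simp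
  qed
  thus "\<exists>f'\<in>Tr X' F'. \<forall>y\<in>\<iota> ` X. f' y \<in> \<iota> ` X \<and> inv_into X \<iota> (f' y) = f (inv_into X \<iota> y)" using f'(1) by blast
qed



lemma one_Some: assumes "one A m = Some e" shows "e \<in> A" "\<And>x. x \<in> A \<Longrightarrow> m e x = x" "\<And>x. x \<in> A \<Longrightarrow> m x e = x"
proof -
  show "e \<in> A" using one_props(1)[of A m] assms by (simp add: Some_in_Sdot)
  fix x assume "x \<in> A"
  thus "m e x = x" using one_props(2)[of x A m] assms by simp
  show "m x e = x" using one_props(3)[of x A m] assms \<open>x \<in> A\<close> by simp
qed

lemma monoid_one: "is_monoid A m \<longleftrightarrow> one A m \<noteq> None"
proof
  assume "is_monoid A m" thus "one A m \<noteq> None" unfolding one_def by simp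
next
  assume "one A m \<noteq> None"
  then obtain e where "one A m = Some e" by blast
  hence "one A m = Some e" .
  have "\<forall>x\<in>A. m e x = x \<and> m x e = x" using one_Some(2,3)[OF \<open>one A m = Some e\<close>] by blast
  thus "is_monoid A m" unfolding is_monoid_def using one_Some(1)[OF \<open>one A m = Some e\<close>] by blast
qed

lemma monoid_hom: assumes "is_monoid A m" "shom h A m B n" "h ` A = B" shows "is_monoid B n"
proof -
  obtain e where e: "e \<in> A" "\<forall>x\<in>A. m e x = x \<and> m x e = x" using assms(1) unfolding is_monoid_def by blast
  have "h e \<in> B" using e(1) assms(3) by blast
  moreover have "\<forall>y\<in>B. n (h e) y = y \<and> n y (h e) = y"
  proof
    fix y assume "y \<in> B"
    then obtain x where x: "x \<in> A" "y = h x" using assms(3) by blast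
    have "n (h e) y = h (m e x)" "n y (h e) = h (m x e)" using assms(2) e(1) x unfolding shom_def by auto
    thus "n (h e) y = y \<and> n y (h e) = y" using e(2) x by simp
  qed
  ultimately show ?thesis unfolding is_monoid_def by blast
qed

lemma monoid_prod: assumes "is_monoid A m" "is_monoid B n" shows "is_monoid (A \<times> B) (prod_mult m n)"
proof -
  obtain e where e: "e \<in> A" "\<forall>x\<in>A. m e x = x \<and> m x e = x" using assms(1) unfolding is_monoid_def by blast
  obtain f where f: "f \<in> B" "\<forall>x\<in>B. n f x = x \<and> n x f = x" using assms(2) unfolding is_monoid_def by blast
  have "\<forall>x\<in>A \<times> B. prod_mult m n (e, f) x = x \<and> prod_mult m n x (e, f) = x"
    using e f unfolding prod_mult_def by auto
  thus ?thesis using e(1) f(1) unfolding is_monoid_def by blast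
qed

lemma rmul_None: "None \<in> Sdot A m \<Longrightarrow> rmul A m s None = Some s"
  by (simp add: rmul_app)

lemma rmul_Some: "a \<in> A \<Longrightarrow> rmul A m s (Some a) = Some (m a s)"
  by (simp add: rmul_app Some_in_Sdot)

lemma rmul_in_bar: "s \<in> A \<Longrightarrow> rmul A m s \<in> Tr (Sdot A m) (rmul A m ` A)"
  unfolding Tr_def by blast

lemma bar_sub:
  assumes V: "pseudovariety W" and mb: "memb W (bar_carrier A m) (bar_mult A m)" and fA: "fsg A m"
    and sub: "B \<subseteq> A" "sgrp B m"
  shows "memb W (bar_carrier B m) (bar_mult B m)"
proof -
  have sA: "sgrp A m" and finA: "finite A" using fA unfolding fsg_def by auto
  have finB: "finite B" using finA sub(1) finite_subset by blast
  define \<iota> where "\<iota> x = (case x of None \<Rightarrow> one A m | Some b \<Rightarrow> Some b)" for x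
  have iN: "\<iota> None = one A m" and iS: "\<iota> (Some b) = Some b" for b unfolding \<iota>_def by simp_all
  have inj: "inj_on \<iota> (Sdot B m)"
  proof (rule inj_onI)
    fix x y assume x: "x \<in> Sdot B m" and y: "y \<in> Sdot B m" and xy: "\<iota> x = \<iota> y"
    have noB: "one A m \<noteq> Some b" if "b \<in> B" "None \<in> Sdot B m" for b
    proof
      assume e: "one A m = Some b"
      have "\<forall>z\<in>B. m b z = z \<and> m z b = z" using one_Some(2,3)[OF e] sub(1) by blast
      hence "is_monoid B m" using that(1) unfolding is_monoid_def by blast
      thus False using that(2) by (simp add: None_in_Sdot)
    qed
    show "x = y"
      using x
    proof (rule Sdot_cases)
      assume x0: "x = None"
      show ?thesis using y
      proof (rule Sdot_cases)
        fix b assume b: "b \<in> B" "y = Some b"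
        have "None \<in> Sdot B m" using x x0 by simp
        hence "one A m \<noteq> Some b" using noB[OF b(1)] by blast
        thus ?thesis using xy x0 iN iS b by simp
      qed (use x0 in simp)
    next
      fix a assume a: "a \<in> B" "x = Some a"
      show ?thesis using y
      proof (rule Sdot_cases)
        assume y0: "y = None"
        have "None \<in> Sdot B m" using y y0 by simp
        hence "one A m \<noteq> Some a" using noB[OF a(1)] by blast
        thus ?thesis using xy y0 iN iS a by simp
      next
        fix b assume "b \<in> B" "y = Some b" thus ?thesis using xy a iS by simp
      qed
    qed
  qed
  have iX: "\<iota> ` Sdot B m \<subseteq> Sdot A m"
  proof
    fix z assume "z \<in> \<iota> ` Sdot B m"
    then obtain x where x: "x \<in> Sdot B m" "z = \<iota> x" by blast
    show "z \<in> Sdot A m" using x(1)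
    proof (rule Sdot_cases)
      assume "x = None" thus ?thesis using x(2) iN one_props(1) by simp
    next
      fix b assume "b \<in> B" "x = Some b" thus ?thesis using x(2) iS sub(1) by (auto simp: Some_in_Sdot)
    qed
  qed
  have cov: "\<exists>f'\<in>Tr (Sdot A m) (rmul A m ` A). \<forall>x\<in>Sdot B m. f' (\<iota> x) = \<iota> (f x)"
    if f: "f \<in> rmul B m ` B" for f
  proof -
    obtain s where s: "s \<in> B" "f = rmul B m s" using f by blast
    have sA': "s \<in> A" using s(1) sub(1) by blast
    have "\<forall>x\<in>Sdot B m. rmul A m s (\<iota> x) = \<iota> (f x)"
    proof
      fix x assume x: "x \<in> Sdot B m"
      show "rmul A m s (\<iota> x) = \<iota> (f x)" using x
      proof (rule Sdot_cases)
        assume x0: "x = None"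
        have "rmul A m s (\<iota> x) = Some s" using x0 iN rmul_one[OF sA'] by simp
        moreover have "f x = Some s" using s(2) x0 x rmul_None by simp
        ultimately show ?thesis using iS by simp
      next
        fix b assume b: "b \<in> B" "x = Some b"
        have "b \<in> A" using b(1) sub(1) by blast
        thus ?thesis using b s(2) iS rmul_Some[OF \<open>b \<in> A\<close>, of m s] rmul_Some[OF b(1), of m s] by simp
      qed
    qed
    thus ?thesis using rmul_in_bar[OF sA'] by blast
  qed
  show ?thesis
    unfolding bar_carrier_Tr bar_mult_trm
    by (rule tr_div_emb[OF V mb[unfolded bar_carrier_Tr bar_mult_trm] tclosed_rmul[OF sA]
        Sdot_ne[OF sgrpD(1)[OF sub(2)]] finite_Sdot[OF finB] tclosed_rmul[OF sub(2)] inj iX cov])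
qed



lemma bar_hom:
  assumes V: "pseudovariety W" and mb: "memb W (bar_carrier A m) (bar_mult A m)" and fA: "fsg A m"
    and fB: "fsg B n" and h: "shom h A m B n" "h ` A = B"
  shows "memb W (bar_carrier B n) (bar_mult B n)"
proof -
  have sA: "sgrp A m" using fA unfolding fsg_def by auto
  have sB: "sgrp B n" and finB: "finite B" using fB unfolding fsg_def by auto
  have hA: "h a \<in> B" if "a \<in> A" for a using that h(2) by blast
  have hm: "h (m a b) = n (h a) (h b)" if "a \<in> A" "b \<in> A" for a b using h(1) that unfolding shom_def by blast
  define \<pi> where "\<pi> x = (case x of None \<Rightarrow> one B n | Some a \<Rightarrow> Some (h a))" for x
  have pN: "\<pi> None = one B n" and pS: "\<pi> (Some a) = Some (h a)" for a unfolding \<pi>_def by simp_all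
  have img: "\<pi> ` Sdot A m = Sdot B n"
  proof
    show "\<pi> ` Sdot A m \<subseteq> Sdot B n"
    proof
      fix z assume "z \<in> \<pi> ` Sdot A m"
      then obtain x where x: "x \<in> Sdot A m" "z = \<pi> x" by blast
      show "z \<in> Sdot B n" using x(1)
      proof (rule Sdot_cases)
        assume "x = None" thus ?thesis using x(2) pN one_props(1) by simp
      next
        fix a assume "a \<in> A" "x = Some a" thus ?thesis using x(2) pS hA by (simp add: Some_in_Sdot)
      qed
    qed
  next
    show "Sdot B n \<subseteq> \<pi> ` Sdot A m"
    proof
      fix z assume z: "z \<in> Sdot B n"
      show "z \<in> \<pi> ` Sdot A m" using z
      proof (rule Sdot_cases)
        assume z0: "z = None"
        hence "\<not> is_monoid B n" using z by (simp add: None_in_Sdot)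
        hence nA: "\<not> is_monoid A m" using monoid_hom h by blast
        hence "None \<in> Sdot A m" by (simp add: None_in_Sdot)
        moreover have "\<pi> None = None" using pN one_None[OF \<open>\<not> is_monoid B n\<close>] by simp
        ultimately show ?thesis using z0 by (metis imageI)
      next
        fix b assume b: "b \<in> B" "z = Some b"
        then obtain a where a: "a \<in> A" "b = h a" using h(2) by blast
        hence "Some a \<in> Sdot A m" by (simp add: Some_in_Sdot)
        moreover have "\<pi> (Some a) = z" using pS a b by simp
        ultimately show ?thesis by (metis imageI)
      qed
    qed
  qed
  have cov: "\<exists>f'\<in>Tr (Sdot A m) (rmul A m ` A). \<forall>y\<in>Sdot A m. f' y \<in> Sdot A m \<and> \<pi> (f' y) = f (\<pi> y)"
    if f: "f \<in> rmul B n ` B" for f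
  proof -
    obtain s where s: "s \<in> A" "f = rmul B n (h s)" using f h(2) by blast
    have "\<forall>y\<in>Sdot A m. rmul A m s y \<in> Sdot A m \<and> \<pi> (rmul A m s y) = f (\<pi> y)"
    proof
      fix y assume y: "y \<in> Sdot A m"
      have "rmul A m s y \<in> Sdot A m" using rmul_PiE[OF sA s(1)] y by blast
      moreover have "\<pi> (rmul A m s y) = f (\<pi> y)" using y
      proof (rule Sdot_cases)
        assume y0: "y = None"
        have "None \<in> Sdot A m" using y y0 by simp
        hence "rmul A m s y = Some s" using rmul_None y0 by simp
        hence "\<pi> (rmul A m s y) = Some (h s)" using pS by simp
        moreover have "f (\<pi> y) = Some (h s)" using s(2) y0 pN rmul_one[OF hA[OF s(1)]] by simp
        ultimately show ?thesis by simp
      next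
        fix a assume a: "a \<in> A" "y = Some a"
        have "\<pi> (rmul A m s y) = Some (n (h a) (h s))" using rmul_Some[OF a(1), of m s] a(2) pS hm[OF a(1) s(1)] by simp
        moreover have "f (\<pi> y) = Some (n (h a) (h s))" using s(2) a(2) pS rmul_Some[OF hA[OF a(1)], of n "h s"] by simp
        ultimately show ?thesis by simp
      qed
      ultimately show "rmul A m s y \<in> Sdot A m \<and> \<pi> (rmul A m s y) = f (\<pi> y)" by blast
    qed
    thus ?thesis using rmul_in_bar[OF s(1)] by blast
  qed
  show ?thesis
    unfolding bar_carrier_Tr bar_mult_trm
    by (rule tr_div[OF V mb[unfolded bar_carrier_Tr bar_mult_trm] tclosed_rmul[OF sA]
        Sdot_ne[OF sgrpD(1)[OF sB]] finite_Sdot[OF finB] tclosed_rmul[OF sB] subset_refl img cov])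
qed

lemma bar_triv:
  assumes fA: "fsg A m" and c: "card A = 1"
  shows "card (bar_carrier A m) = 1"
proof -
  obtain a where a: "A = {a}" using c card_1_singletonE by blast
  have maa: "m a a = a" using fA a unfolding fsg_def sgrp_def by blast
  have mon: "is_monoid A m" unfolding is_monoid_def using a maa by simp
  have S: "Sdot A m = {Some a}" unfolding Sdot_def using mon a by simp
  have "rmul A m a = cst A m (Some a)"
    unfolding rmul_def cst_def S using maa by (intro ext) simp
  have "bar_carrier A m = rmul A m ` A \<union> cst A m ` Sdot A m" unfolding bar_carrier_def ..
  also have "\<dots> = {rmul A m a}" unfolding S using a \<open>rmul A m a = cst A m (Some a)\<close> by simp
  finally have "bar_carrier A m = {rmul A m a}" .
  thus ?thesis by simp
qed



definition psi :: "'a set \<Rightarrow> 'b set \<Rightarrow> ('a \<Rightarrow> 'a) \<Rightarrow> ('b \<Rightarrow> 'b) \<Rightarrow> ('a \<times> 'b \<Rightarrow> 'a \<times> 'b)" where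
  "psi X1 X2 f g = restrict (\<lambda>p. (f (fst p), g (snd p))) (X1 \<times> X2)"

lemma psi_app: "p \<in> X1 \<times> X2 \<Longrightarrow> psi X1 X2 f g p = (f (fst p), g (snd p))"
  unfolding psi_def by simp

lemma psi_ext: "psi X1 X2 f g \<in> extensional (X1 \<times> X2)"
  unfolding psi_def by simp

lemma psi_PiE: assumes "f \<in> X1 \<rightarrow>\<^sub>E X1" "g \<in> X2 \<rightarrow>\<^sub>E X2" shows "psi X1 X2 f g \<in> (X1 \<times> X2) \<rightarrow>\<^sub>E (X1 \<times> X2)"
proof -
  have "\<forall>p\<in>X1 \<times> X2. psi X1 X2 f g p \<in> X1 \<times> X2"
  proof
    fix p assume p: "p \<in> X1 \<times> X2"
    have "f (fst p) \<in> X1" "g (snd p) \<in> X2" using assms p by (auto simp: PiE_iff)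
    thus "psi X1 X2 f g p \<in> X1 \<times> X2" using psi_app[OF p] by simp
  qed
  thus ?thesis using psi_ext[of X1 X2 f g] by (simp add: PiE_iff)
qed

lemma psi_hom: assumes "f \<in> X1 \<rightarrow>\<^sub>E X1" "g \<in> X2 \<rightarrow>\<^sub>E X2"
  shows "psi X1 X2 (trm X1 f f') (trm X2 g g') = trm (X1 \<times> X2) (psi X1 X2 f g) (psi X1 X2 f' g')"
proof (rule ext_eqI[OF psi_ext trm_ext])
  fix p assume p: "p \<in> X1 \<times> X2"
  have fp: "f (fst p) \<in> X1" "g (snd p) \<in> X2" using assms p by (auto simp: PiE_iff)
  have "psi X1 X2 (trm X1 f f') (trm X2 g g') p = (f' (f (fst p)), g' (g (snd p)))"
    using p by (auto simp: psi_app trm_app)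
  also have "\<dots> = psi X1 X2 f' g' (psi X1 X2 f g p)" using p fp by (simp add: psi_app)
  also have "\<dots> = trm (X1 \<times> X2) (psi X1 X2 f g) (psi X1 X2 f' g') p" using p by (simp add: trm_app)
  finally show "psi X1 X2 (trm X1 f f') (trm X2 g g') p = trm (X1 \<times> X2) (psi X1 X2 f g) (psi X1 X2 f' g') p" .
qed

lemma psi_const: "psi X1 X2 (restrict (\<lambda>_. c1) X1) (restrict (\<lambda>_. c2) X2) = restrict (\<lambda>_. (c1, c2)) (X1 \<times> X2)"
  unfolding psi_def by (intro ext) (auto simp: mem_Times_iff)

lemma bar_prod:
  assumes V: "pseudovariety W" and mA: "memb W (bar_carrier A m) (bar_mult A m)" and fA: "fsg A m"
    and mB: "memb W (bar_carrier B n) (bar_mult B n)" and fB: "fsg B n"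
  shows "memb W (bar_carrier (A \<times> B) (prod_mult m n)) (bar_mult (A \<times> B) (prod_mult m n))"
proof -
  have sA: "sgrp A m" and finA: "finite A" using fA unfolding fsg_def by auto
  have sB: "sgrp B n" and finB: "finite B" using fB unfolding fsg_def by auto
  define X1 where "X1 = Sdot A m"
  define X2 where "X2 = Sdot B n"
  define XX where "XX = X1 \<times> X2"
  define G where "G = (\<lambda>q. psi X1 X2 (rmul A m (fst q)) (rmul B n (snd q))) ` (A \<times> B)"
  have cA: "tclosed X1 (rmul A m ` A)" unfolding X1_def by (rule tclosed_rmul[OF sA])
  have cB: "tclosed X2 (rmul B n ` B)" unfolding X2_def by (rule tclosed_rmul[OF sB])
  have rA: "rmul A m s \<in> X1 \<rightarrow>\<^sub>E X1" if "s \<in> A" for s unfolding X1_def by (rule rmul_PiE[OF sA that])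
  have rB: "rmul B n s \<in> X2 \<rightarrow>\<^sub>E X2" if "s \<in> B" for s unfolding X2_def by (rule rmul_PiE[OF sB that])
  have X1ne: "X1 \<noteq> {}" unfolding X1_def by (rule Sdot_ne[OF sgrpD(1)[OF sA]])
  have X2ne: "X2 \<noteq> {}" unfolding X2_def by (rule Sdot_ne[OF sgrpD(1)[OF sB]])
  have finXX: "finite XX" unfolding XX_def X1_def X2_def using finite_Sdot[OF finA] finite_Sdot[OF finB] by simp
  have XXne: "XX \<noteq> {}" unfolding XX_def using X1ne X2ne by blast
  have cG: "tclosed XX G" unfolding tclosed_def
  proof (intro conjI ballI subsetI)
    fix f assume "f \<in> G"
    then obtain s t where "s \<in> A" "t \<in> B" "f = psi X1 X2 (rmul A m s) (rmul B n t)" unfolding G_def by auto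
    thus "f \<in> XX \<rightarrow>\<^sub>E XX" unfolding XX_def using psi_PiE[OF rA rB] by simp
  next
    fix f g assume "f \<in> G" "g \<in> G"
    then obtain s t s' t' where st: "s \<in> A" "t \<in> B" "f = psi X1 X2 (rmul A m s) (rmul B n t)"
      "s' \<in> A" "t' \<in> B" "g = psi X1 X2 (rmul A m s') (rmul B n t')" unfolding G_def by auto
    have "trm XX f g = psi X1 X2 (trm X1 (rmul A m s) (rmul A m s')) (trm X2 (rmul B n t) (rmul B n t'))"
      unfolding XX_def st(3,6) by (rule psi_hom[OF rA[OF st(1)] rB[OF st(2)], symmetric])
    also have "\<dots> = psi X1 X2 (rmul A m (m s s')) (rmul B n (n t t'))"
      unfolding X1_def X2_def using rmul_mult[OF sA st(1,4)] rmul_mult[OF sB st(2,5)] by simp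
    finally show "trm XX f g \<in> G" unfolding G_def using sgrpD(2)[OF sA st(1,4)] sgrpD(2)[OF sB st(2,5)]
      by (auto intro!: image_eqI[where x="(m s s', n t t')"])
  qed
  have step1: "memb W (Tr XX G) (trm XX)"
  proof -
    define P where "P = bar_carrier A m \<times> bar_carrier B n"
    define pm where "pm = prod_mult (trm X1) (trm X2)"
    have mP: "memb W P pm" unfolding P_def pm_def X1_def X2_def
      using memb_prod[OF V mA mB] by (simp add: bar_mult_trm)
    have fP: "fsg P pm" using memb_fsg[OF V mP] .
    have PA: "fst q \<in> X1 \<rightarrow>\<^sub>E X1" "snd q \<in> X2 \<rightarrow>\<^sub>E X2" if "q \<in> P" for q
    proof -
      have "fst q \<in> Tr X1 (rmul A m ` A)" "snd q \<in> Tr X2 (rmul B n ` B)"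
        using that unfolding P_def bar_carrier_Tr X1_def X2_def by (auto simp: mem_Times_iff)
      thus "fst q \<in> X1 \<rightarrow>\<^sub>E X1" "snd q \<in> X2 \<rightarrow>\<^sub>E X2" using Tr_sub[OF cA] Tr_sub[OF cB] by (meson subsetD)+
    qed
    define h where "h q = psi X1 X2 (fst q) (snd q)" for q
    define U where "U = {q \<in> P. h q \<in> Tr XX G}"
    have hhom: "h (pm q q') = trm XX (h q) (h q')" if "q \<in> P" for q q'
      unfolding h_def pm_def prod_mult_def XX_def using psi_hom[OF PA[OF that]] by simp
    have UP: "U \<subseteq> P" unfolding U_def by blast
    have hcon: "h (restrict (\<lambda>_. c1) X1, restrict (\<lambda>_. c2) X2) = restrict (\<lambda>_. (c1, c2)) XX" for c1 c2
      unfolding h_def XX_def by (simp add: psi_const)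
    have conP: "(restrict (\<lambda>_. c1) X1, restrict (\<lambda>_. c2) X2) \<in> P" if "c1 \<in> X1" "c2 \<in> X2" for c1 c2
      unfolding P_def bar_carrier_Tr using Tr_const[OF that(1)[unfolded X1_def]] Tr_const[OF that(2)[unfolded X2_def]]
      unfolding X1_def X2_def by simp
    have img: "h ` U = Tr XX G"
    proof
      show "h ` U \<subseteq> Tr XX G" unfolding U_def by blast
      show "Tr XX G \<subseteq> h ` U"
      proof
        fix g assume g: "g \<in> Tr XX G"
        show "g \<in> h ` U"
        proof (cases "g \<in> G")
          case True
          then obtain s t where st: "s \<in> A" "t \<in> B" "g = psi X1 X2 (rmul A m s) (rmul B n t)" unfolding G_def by auto
          have "(rmul A m s, rmul B n t) \<in> P" unfolding P_def bar_carrier_Tr using rmul_in_bar[OF st(1)] rmul_in_bar[OF st(2)] by simp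
          moreover have hg: "h (rmul A m s, rmul B n t) = g" unfolding h_def using st by simp
          ultimately have "(rmul A m s, rmul B n t) \<in> U" unfolding U_def using g by simp
          thus ?thesis using hg by (metis imageI)
        next
          case False
          then obtain c where c: "c \<in> XX" "g = restrict (\<lambda>_. c) XX" using g unfolding Tr_def by blast
          obtain c1 c2 where cc: "c = (c1, c2)" "c1 \<in> X1" "c2 \<in> X2" using c(1) unfolding XX_def by blast
          have hg: "h (restrict (\<lambda>_. c1) X1, restrict (\<lambda>_. c2) X2) = g" using hcon c cc by simp
          moreover have "(restrict (\<lambda>_. c1) X1, restrict (\<lambda>_. c2) X2) \<in> P" using conP[OF cc(2,3)] .
          ultimately have "(restrict (\<lambda>_. c1) X1, restrict (\<lambda>_. c2) X2) \<in> U" unfolding U_def using g by simp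
          thus ?thesis using hg by (metis imageI)
        qed
      qed
    qed
    have sU: "sgrp U pm" unfolding sgrp_def
    proof (intro conjI ballI)
      obtain c0 where "c0 \<in> XX" using XXne by blast
      hence "restrict (\<lambda>_. c0) XX \<in> Tr XX G" by (rule Tr_const)
      thus "U \<noteq> {}" using img by auto
    next
      fix q q' assume q: "q \<in> U" "q' \<in> U"
      have "q \<in> P" "q' \<in> P" "h q \<in> Tr XX G" "h q' \<in> Tr XX G" using q unfolding U_def by blast+
      moreover have "pm q q' \<in> P" using fP \<open>q \<in> P\<close> \<open>q' \<in> P\<close> unfolding fsg_def sgrp_def by blast
      ultimately show "pm q q' \<in> U" unfolding U_def using hhom Tr_closed[OF cG] by simp
    next
      fix q q' q'' assume "q \<in> U" "q' \<in> U" "q'' \<in> U"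
      hence "q \<in> P" "q' \<in> P" "q'' \<in> P" using UP by blast+
      thus "pm (pm q q') q'' = pm q (pm q' q'')" using sgrpD(3)[of P pm] fP unfolding fsg_def by blast
    qed
    have hh: "shom h U pm (Tr XX G) (trm XX)" unfolding shom_def
    proof (intro conjI ballI)
      fix q assume "q \<in> U" thus "h q \<in> Tr XX G" unfolding U_def by blast
    next
      fix q q' assume "q \<in> U" "q' \<in> U" hence "q \<in> P" using UP by blast
      thus "h (pm q q') = trm XX (h q) (h q')" by (rule hhom)
    qed
    show ?thesis by (rule memb_div[OF V mP UP sU hh img Tr_fsg[OF finXX XXne cG]])
  qed
  define mm where "mm = prod_mult m n"
  have sAB: "sgrp (A \<times> B) mm" using fsg_prod[OF fA fB] unfolding mm_def fsg_def by simp
  have fAB: "finite (A \<times> B)" using finA finB by simp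
  define \<iota> where "\<iota> x = (case x of None \<Rightarrow> (one A m, one B n) | Some p \<Rightarrow> (Some (fst p), Some (snd p)))" for x
  have iN: "\<iota> None = (one A m, one B n)" and iS: "\<iota> (Some p) = (Some (fst p), Some (snd p))" for p
    unfolding \<iota>_def by simp_all
  have NoneAB: "one A m = None \<or> one B n = None" if "None \<in> Sdot (A \<times> B) mm"
  proof -
    have "\<not> is_monoid (A \<times> B) mm" using that by (simp add: None_in_Sdot)
    hence "\<not> is_monoid A m \<or> \<not> is_monoid B n" using monoid_prod unfolding mm_def by blast
    thus ?thesis unfolding monoid_one by blast
  qed
  have inj: "inj_on \<iota> (Sdot (A \<times> B) mm)"
  proof (rule inj_onI)
    fix x y assume x: "x \<in> Sdot (A \<times> B) mm" and y: "y \<in> Sdot (A \<times> B) mm" and xy: "\<iota> x = \<iota> y"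
    show "x = y"
    proof (cases x)
      case None
      show ?thesis
      proof (cases y)
        case (Some p) thus ?thesis using xy None iN iS NoneAB x by auto
      qed (use None in simp)
    next
      case (Some p)
      show ?thesis
      proof (cases y)
        case None thus ?thesis using xy Some iN iS NoneAB y by auto
      next
        case (Some q) thus ?thesis using xy \<open>x = Some p\<close> iS by (auto simp: prod_eq_iff)
      qed
    qed
  qed
  have iX: "\<iota> ` Sdot (A \<times> B) mm \<subseteq> XX"
  proof
    fix z assume "z \<in> \<iota> ` Sdot (A \<times> B) mm"
    then obtain x where x: "x \<in> Sdot (A \<times> B) mm" "z = \<iota> x" by blast
    show "z \<in> XX" using x(1)
    proof (rule Sdot_cases)
      assume "x = None" thus ?thesis using x(2) iN unfolding XX_def X1_def X2_def by (simp add: one_props(1))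
    next
      fix p assume "p \<in> A \<times> B" "x = Some p"
      thus ?thesis using x(2) iS unfolding XX_def X1_def X2_def by (auto simp: Some_in_Sdot)
    qed
  qed
  have cov: "\<exists>f'\<in>Tr XX G. \<forall>x\<in>Sdot (A \<times> B) mm. f' (\<iota> x) = \<iota> (f x)"
    if f: "f \<in> rmul (A \<times> B) mm ` (A \<times> B)" for f
  proof -
    obtain s t where st: "s \<in> A" "t \<in> B" "f = rmul (A \<times> B) mm (s, t)" using f by auto
    let ?f' = "psi X1 X2 (rmul A m s) (rmul B n t)"
    have "?f' \<in> G" unfolding G_def using st by (auto intro!: image_eqI[where x="(s, t)"])
    hence f'T: "?f' \<in> Tr XX G" unfolding Tr_def by blast
    have "\<forall>x\<in>Sdot (A \<times> B) mm. ?f' (\<iota> x) = \<iota> (f x)"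
    proof
      fix x assume x: "x \<in> Sdot (A \<times> B) mm"
      show "?f' (\<iota> x) = \<iota> (f x)" using x
      proof (rule Sdot_cases)
        assume x0: "x = None"
        have in1: "\<iota> x \<in> X1 \<times> X2" using x0 iN unfolding X1_def X2_def by (simp add: one_props(1))
        have "?f' (\<iota> x) = (rmul A m s (one A m), rmul B n t (one B n))" using psi_app[OF in1] x0 iN by simp
        also have "\<dots> = (Some s, Some t)" using rmul_one[OF st(1)] rmul_one[OF st(2)] by simp
        also have "\<dots> = \<iota> (Some (s, t))" using iS by simp
        also have "Some (s, t) = f x"
        proof -
          have N: "None \<in> Sdot (A \<times> B) mm" using x x0 by simp
          show ?thesis using st(3) x0 rmul_None[OF N] by simp
        qed
        finally show ?thesis .
      next
        fix p assume p: "p \<in> A \<times> B" "x = Some p"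
        obtain a b where ab: "p = (a, b)" "a \<in> A" "b \<in> B" using p(1) by blast
        have in1: "\<iota> x \<in> X1 \<times> X2" using p ab iS unfolding X1_def X2_def by (simp add: Some_in_Sdot)
        have "?f' (\<iota> x) = (rmul A m s (Some a), rmul B n t (Some b))" using psi_app[OF in1] p ab iS by simp
        also have "\<dots> = (Some (m a s), Some (n b t))" using rmul_Some[OF ab(2)] rmul_Some[OF ab(3)] by simp
        also have "\<dots> = \<iota> (Some (m a s, n b t))" using iS by simp
        also have "Some (m a s, n b t) = f x"
          using st(3) p ab rmul_Some[OF p(1), of mm "(s, t)"] unfolding mm_def prod_mult_def by simp
        finally show ?thesis .
      qed
    qed
    thus ?thesis using f'T by blast
  qed
  show ?thesis
    unfolding bar_carrier_Tr bar_mult_trm mm_def[symmetric]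
    by (rule tr_div_emb[OF V step1 cG Sdot_ne[OF sgrpD(1)[OF sAB]] finite_Sdot[OF fAB]
        tclosed_rmul[OF sAB] inj iX cov])
qed



definition barcl :: "nsg set \<Rightarrow> nsg set" where
  "barcl W = {(A, m). fsg A m \<and> memb W (bar_carrier A m) (bar_mult A m)}"

lemma iso_hom: "isomorphic A m B n \<Longrightarrow> \<exists>h. shom h A m B n \<and> h ` A = B"
  unfolding isomorphic_def bij_betw_def by blast

lemma pv_barcl: assumes V: "pseudovariety W" shows "pseudovariety (barcl W)"
proof -
  have c1: "\<forall>(A, m)\<in>barcl W. fsg A m" unfolding barcl_def by auto
  have c2: "(A, m) \<in> barcl W" if "fsg A m" "card A = 1" for A m
    using memb_triv[OF V fsg_bar[OF that(1)] bar_triv[OF that]] that(1) unfolding barcl_def by simp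
  have c3: "(C, p) \<in> barcl W" if prem: "(A, m) \<in> barcl W" "(B, n) \<in> barcl W" "fsg C p"
    "isomorphic (A \<times> B) (prod_mult m n) C p" for A B C m n p
  proof -
    have a: "fsg A m" "memb W (bar_carrier A m) (bar_mult A m)" using prem(1) unfolding barcl_def by auto
    have b: "fsg B n" "memb W (bar_carrier B n) (bar_mult B n)" using prem(2) unfolding barcl_def by auto
    have "memb W (bar_carrier (A \<times> B) (prod_mult m n)) (bar_mult (A \<times> B) (prod_mult m n))"
      by (rule bar_prod[OF V a(2) a(1) b(2) b(1)])
    moreover obtain h where "shom h (A \<times> B) (prod_mult m n) C p" "h ` (A \<times> B) = C" using iso_hom[OF prem(4)] by blast
    ultimately have "memb W (bar_carrier C p) (bar_mult C p)"
      using bar_hom[OF V _ fsg_prod[OF a(1) b(1)] prem(3)] by blast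
    thus ?thesis using prem(3) unfolding barcl_def by simp
  qed
  have c4: "(B, m) \<in> barcl W" if "(A, m) \<in> barcl W" "B \<subseteq> A" "sgrp B m" for A B m
  proof -
    have a: "fsg A m" "memb W (bar_carrier A m) (bar_mult A m)" using that(1) unfolding barcl_def by auto
    have "fsg B m" using a(1) that(2,3) finite_subset unfolding fsg_def by blast
    thus ?thesis using bar_sub[OF V a(2) a(1) that(2,3)] unfolding barcl_def by simp
  qed
  have c5: "(B, n) \<in> barcl W" if "(A, m) \<in> barcl W" "fsg B n" "shom h A m B n" "h ` A = B" for A B m n h
  proof -
    have a: "fsg A m" "memb W (bar_carrier A m) (bar_mult A m)" using that(1) unfolding barcl_def by auto
    thus ?thesis using bar_hom[OF V a(2) a(1) that(2,3,4)] that(2) unfolding barcl_def by simp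
  qed
  show ?thesis unfolding pseudovariety_def
    apply (intro conjI allI impI)
        apply (rule c1)
       apply (erule conjE, erule (1) c2)
      apply (elim conjE, erule (3) c3)
     apply (elim conjE, erule (2) c4)
    apply (elim conjE, erule (3) c5)
    done
qed

lemma K1:
  assumes V: "pseudovariety W" and K: "allfsg K"
    and mK: "\<And>A m. (A, m) \<in> K \<Longrightarrow> memb W (bar_carrier A m) (bar_mult A m)"
    and B: "(B, n) \<in> pv_gen K"
  shows "memb W (bar_carrier B n) (bar_mult B n)"
proof -
  have "pv_gen K \<subseteq> barcl W"
  proof (rule pv_gen_least[OF pv_barcl[OF V]])
    fix A m assume Am: "(A, m) \<in> K"
    have fA: "fsg A m" using K Am unfolding allfsg_def by blast
    obtain C p where C: "fsg C p" "isomorphic (C::nat set) p A m" using nat_copy[OF fA] by blast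
    have "isomorphic A m C p" using iso_sym[OF C(2)] C(1) unfolding fsg_def by blast
    then obtain h where h: "shom h A m C p" "h ` A = C" using iso_hom by blast
    have "memb W (bar_carrier C p) (bar_mult C p)" by (rule bar_hom[OF V mK[OF Am] fA C(1) h])
    hence "(C, p) \<in> barcl W" using C(1) unfolding barcl_def by simp
    thus "memb (barcl W) A m" using C(2) by (rule membI)
  qed
  thus ?thesis using B unfolding barcl_def by blast
qed

definition KK :: "nsg set \<Rightarrow> ((nat option \<Rightarrow> nat option) set \<times> ((nat option \<Rightarrow> nat option) \<Rightarrow> (nat option \<Rightarrow> nat option) \<Rightarrow> (nat option \<Rightarrow> nat option))) set" where
  "KK V = {(bar_carrier A m, bar_mult A m) | A m. (A, m) \<in> V}"

lemma pv_bar_KK: "pv_bar V = pv_gen (KK V)"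
  unfolding pv_bar_def KK_def ..

lemma allfsg_KK: assumes "pseudovariety V" shows "allfsg (KK V)"
  unfolding allfsg_def KK_def using fsg_bar pvD(1)[OF assms] by blast



definition pow_mult :: "'i set \<Rightarrow> ('a \<Rightarrow> 'a \<Rightarrow> 'a) \<Rightarrow> ('i \<Rightarrow> 'a) \<Rightarrow> ('i \<Rightarrow> 'a) \<Rightarrow> ('i \<Rightarrow> 'a)" where
  "pow_mult I m f g = restrict (\<lambda>i. m (f i) (g i)) I"

lemma memb_pow:
  fixes A :: "'a set" and I :: "'i set"
  assumes V: "pseudovariety W" and mA: "memb W A m" and I: "finite I"
  shows "memb W (Pi\<^sub>E I (\<lambda>_. A)) (pow_mult I m)"
  using I
proof (induction I rule: finite_induct)
  case empty
  have "fsg {\<lambda>x. undefined} (pow_mult {} m)" unfolding fsg_def sgrp_def pow_mult_def by simp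
  hence "memb W {\<lambda>x. undefined} (pow_mult {} m)" by (rule memb_triv[OF V]) simp
  thus ?case by simp
next
  case (insert i I)
  have fA: "fsg A m" using memb_fsg[OF V mA] .
  have mP: "memb W (A \<times> Pi\<^sub>E I (\<lambda>_. A)) (prod_mult m (pow_mult I m))" by (rule memb_prod[OF V mA insert.IH])
  define \<phi> where "\<phi> q = (snd q)(i := fst q)" for q :: "'a \<times> ('i \<Rightarrow> 'a)"
  have hom: "shom \<phi> (A \<times> Pi\<^sub>E I (\<lambda>_. A)) (prod_mult m (pow_mult I m)) (Pi\<^sub>E (insert i I) (\<lambda>_. A)) (pow_mult (insert i I) m)"
    unfolding shom_def
  proof (intro conjI ballI)
    fix q assume "q \<in> A \<times> Pi\<^sub>E I (\<lambda>_. A)"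
    thus "\<phi> q \<in> Pi\<^sub>E (insert i I) (\<lambda>_. A)" unfolding \<phi>_def using insert.hyps(2) by (auto simp: PiE_iff extensional_def)
  next
    fix q r assume q: "q \<in> A \<times> Pi\<^sub>E I (\<lambda>_. A)" and r: "r \<in> A \<times> Pi\<^sub>E I (\<lambda>_. A)"
    show "\<phi> (prod_mult m (pow_mult I m) q r) = pow_mult (insert i I) m (\<phi> q) (\<phi> r)"
      unfolding \<phi>_def prod_mult_def pow_mult_def using insert.hyps(2) by (intro ext) auto
  qed
  have bij: "bij_betw \<phi> (A \<times> Pi\<^sub>E I (\<lambda>_. A)) (Pi\<^sub>E (insert i I) (\<lambda>_. A))"
    unfolding bij_betw_def
  proof
    show "inj_on \<phi> (A \<times> Pi\<^sub>E I (\<lambda>_. A))"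
    proof (rule inj_onI)
      fix q r assume q: "q \<in> A \<times> Pi\<^sub>E I (\<lambda>_. A)" and r: "r \<in> A \<times> Pi\<^sub>E I (\<lambda>_. A)" and e: "\<phi> q = \<phi> r"
      have "fst q = fst r" using fun_cong[OF e, of i] unfolding \<phi>_def by simp
      moreover have "snd q = snd r"
      proof (rule ext)
        fix j show "snd q j = snd r j"
        proof (cases "j = i")
          case True
          hence "j \<notin> I" using insert.hyps(2) by simp
          thus ?thesis using q r by (auto simp: PiE_iff extensional_def)
        next
          case False thus ?thesis using fun_cong[OF e, of j] unfolding \<phi>_def by simp
        qed
      qed
      ultimately show "q = r" by (simp add: prod_eq_iff)
    qed
  next
    show "\<phi> ` (A \<times> Pi\<^sub>E I (\<lambda>_. A)) = Pi\<^sub>E (insert i I) (\<lambda>_. A)"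
      unfolding PiE_insert_eq \<phi>_def by (simp add: case_prod_beta)
  qed
  show ?case using memb_iso[OF mP] hom bij unfolding isomorphic_def by blast
qed



lemma bar_bar_gen:
  fixes X :: "'x set" and T :: "('x \<Rightarrow> 'x) set"
  assumes V: "pseudovariety W" and mT: "memb W T (trm X)" and fX: "finite X" and XN: "X \<noteq> {}"
    and TP: "T \<subseteq> X \<rightarrow>\<^sub>E X" and Tc: "\<And>a b. a \<in> T \<Longrightarrow> b \<in> T \<Longrightarrow> trm X a b \<in> T"
    and Tk: "\<And>c. c \<in> X \<Longrightarrow> restrict (\<lambda>_. c) X \<in> T"
  shows "memb W (bar_carrier T (trm X)) (bar_mult T (trm X))"
proof -
  define Z where "Z = Sdot T (trm X)"
  define idX where "idX = restrict (\<lambda>x. x) X"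
  define g where "g \<zeta> = (case \<zeta> of None \<Rightarrow> idX | Some \<sigma> \<Rightarrow> \<sigma>)" for \<zeta>
  define ginv where "ginv \<nu> = (if \<nu> \<in> T then Some \<nu> else None)" for \<nu>
  define GG where "GG = insert idX T"
  have gN: "g None = idX" and gS: "g (Some \<sigma>) = \<sigma>" for \<sigma> unfolding g_def by simp_all
  have TP': "t \<in> X \<rightarrow>\<^sub>E X" if "t \<in> T" for t using TP that by blast
  have idP: "idX \<in> X \<rightarrow>\<^sub>E X" unfolding idX_def by simp
  have GP: "\<nu> \<in> X \<rightarrow>\<^sub>E X" if "\<nu> \<in> GG" for \<nu> using that TP' idP unfolding GG_def by blast
  have tid: "trm X idX b = b" if "b \<in> X \<rightarrow>\<^sub>E X" for b
  proof (rule ext_eqI[OF trm_ext])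
    show "b \<in> extensional X" using that by (simp add: PiE_iff)
    fix x assume "x \<in> X" thus "trm X idX b x = b x" unfolding idX_def by (simp add: trm_app)
  qed
  have tid2: "trm X b idX = b" if "b \<in> X \<rightarrow>\<^sub>E X" for b
  proof (rule ext_eqI[OF trm_ext])
    show "b \<in> extensional X" using that by (simp add: PiE_iff)
    fix x assume x: "x \<in> X" hence "b x \<in> X" using that by (simp add: PiE_iff)
    thus "trm X b idX x = b x" using x unfolding idX_def by (simp add: trm_app)
  qed
  have mon: "idX \<in> T" if mt: "is_monoid T (trm X)"
  proof -
    obtain e where e: "e \<in> T" "\<forall>f\<in>T. trm X e f = f \<and> trm X f e = f" using mt unfolding is_monoid_def by blast
    have "e = idX"
    proof (rule ext_eqI)
      show "e \<in> extensional X" using TP'[OF e(1)] by (simp add: PiE_iff)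
      show "idX \<in> extensional X" unfolding idX_def by simp
      fix x assume x: "x \<in> X"
      have "trm X (restrict (\<lambda>_. x) X) e = restrict (\<lambda>_. x) X" using e(2) Tk[OF x] by blast
      hence "trm X (restrict (\<lambda>_. x) X) e x = x" using x by simp
      thus "e x = idX x" using x unfolding idX_def by (simp add: trm_app)
    qed
    thus ?thesis using e(1) by simp
  qed
  have monI: "is_monoid T (trm X)" if "idX \<in> T"
    unfolding is_monoid_def using that tid tid2 TP' by blast
  have gZ: "g \<zeta> \<in> GG" if "\<zeta> \<in> Z" for \<zeta>
    using that unfolding Z_def
  proof (rule Sdot_cases)
    assume "\<zeta> = None" thus ?thesis using gN unfolding GG_def by simp
  next
    fix \<sigma> assume "\<sigma> \<in> T" "\<zeta> = Some \<sigma>" thus ?thesis using gS unfolding GG_def by simp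
  qed
  have ginvZ: "ginv \<nu> \<in> Z" if "\<nu> \<in> GG" for \<nu>
  proof (cases "\<nu> \<in> T")
    case True thus ?thesis unfolding ginv_def Z_def by (simp add: Some_in_Sdot)
  next
    case False
    hence "\<nu> = idX" using that unfolding GG_def by blast
    hence "\<not> is_monoid T (trm X)" using mon False by blast
    thus ?thesis using False unfolding ginv_def Z_def by (simp add: None_in_Sdot)
  qed
  have gginv: "g (ginv \<nu>) = \<nu>" if "\<nu> \<in> GG" for \<nu>
  proof (cases "\<nu> \<in> T")
    case True thus ?thesis unfolding ginv_def using gS by simp
  next
    case False thus ?thesis using that gN unfolding ginv_def GG_def by simp
  qed
  have ginvg: "ginv (g \<zeta>) = \<zeta>" if "\<zeta> \<in> Z" for \<zeta>
    using that unfolding Z_def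
  proof (rule Sdot_cases)
    assume z: "\<zeta> = None"
    hence "\<not> is_monoid T (trm X)" using that unfolding Z_def by (simp add: None_in_Sdot)
    hence "idX \<notin> T" using monI by blast
    thus ?thesis using z gN unfolding ginv_def by simp
  next
    fix \<sigma> assume "\<sigma> \<in> T" "\<zeta> = Some \<sigma>" thus ?thesis using gS unfolding ginv_def by simp
  qed
  have GGc: "trm X a b \<in> T" if "a \<in> GG" "b \<in> T" for a b
  proof (cases "a = idX")
    case True thus ?thesis using tid TP' that(2) by simp
  next
    case False thus ?thesis using that Tc unfolding GG_def by blast
  qed
  define P where "P = Pi\<^sub>E X (\<lambda>_. T)"
  define pm where "pm = pow_mult X (trm X)"
  define \<Delta> where "\<Delta> \<tau> = restrict (\<lambda>_. \<tau>) X" for \<tau> :: "'x \<Rightarrow> 'x"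
  define \<kappa> where "\<kappa> \<zeta> = restrict (\<lambda>x. restrict (\<lambda>_. g \<zeta> x) X) X" for \<zeta>
  define \<nu> where "\<nu> p \<zeta> = restrict (\<lambda>x. p x (g \<zeta> x)) X" for p :: "'x \<Rightarrow> 'x \<Rightarrow> 'x" and \<zeta>
  define \<Phi> where "\<Phi> p = restrict (\<lambda>\<zeta>. ginv (\<nu> p \<zeta>)) Z" for p
  define U where "U = \<Delta> ` T \<union> \<kappa> ` Z"
  have gzx: "g \<zeta> x \<in> X" if "\<zeta> \<in> Z" "x \<in> X" for \<zeta> x using GP[OF gZ[OF that(1)]] that(2) by (simp add: PiE_iff)
  have gext: "g \<zeta> \<in> extensional X" if "\<zeta> \<in> Z" for \<zeta> using GP[OF gZ[OF that]] by (simp add: PiE_iff)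
  have \<Delta>P: "\<Delta> \<tau> \<in> P" if "\<tau> \<in> T" for \<tau> unfolding \<Delta>_def P_def using that by simp
  have \<kappa>P: "\<kappa> \<zeta> \<in> P" if "\<zeta> \<in> Z" for \<zeta> unfolding \<kappa>_def P_def using Tk gzx[OF that] by simp
  have UP: "U \<subseteq> P" unfolding U_def using \<Delta>P \<kappa>P by blast
  have \<nu>\<Delta>: "\<nu> (\<Delta> \<tau>) \<zeta> = trm X (g \<zeta>) \<tau>" if "\<zeta> \<in> Z" for \<zeta> \<tau>
    unfolding \<nu>_def \<Delta>_def trm_def by (intro ext) simp
  have \<nu>\<kappa>: "\<nu> (\<kappa> \<zeta>') \<zeta> = g \<zeta>'" if "\<zeta> \<in> Z" "\<zeta>' \<in> Z" for \<zeta> \<zeta>'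
  proof (rule ext_eqI)
    show "\<nu> (\<kappa> \<zeta>') \<zeta> \<in> extensional X" unfolding \<nu>_def by simp
    show "g \<zeta>' \<in> extensional X" by (rule gext[OF that(2)])
    fix x assume x: "x \<in> X" thus "\<nu> (\<kappa> \<zeta>') \<zeta> x = g \<zeta>' x" unfolding \<nu>_def \<kappa>_def using gzx[OF that(1) x] by simp
  qed
  have \<nu>U: "\<nu> p \<zeta> \<in> GG" if "p \<in> U" "\<zeta> \<in> Z" for p \<zeta>
  proof -
    { fix \<tau> assume "\<tau> \<in> T" "p = \<Delta> \<tau>"
      hence ?thesis using \<nu>\<Delta>[OF that(2)] GGc[OF gZ[OF that(2)]] unfolding GG_def by simp }
    moreover
    { fix \<zeta>' assume "\<zeta>' \<in> Z" "p = \<kappa> \<zeta>'"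
      hence ?thesis using \<nu>\<kappa>[OF that(2)] gZ by simp }
    ultimately show ?thesis using that(1) unfolding U_def by blast
  qed
  have \<Phi>\<Delta>: "\<Phi> (\<Delta> \<tau>) = rmul T (trm X) \<tau>" if "\<tau> \<in> T" for \<tau>
  proof (rule ext_eqI)
    show "\<Phi> (\<Delta> \<tau>) \<in> extensional Z" unfolding \<Phi>_def by simp
    show "rmul T (trm X) \<tau> \<in> extensional Z" unfolding Z_def by (rule rmul_ext)
    fix \<zeta> assume z: "\<zeta> \<in> Z"
    have tT: "trm X (g \<zeta>) \<tau> \<in> T" by (rule GGc[OF gZ[OF z] that])
    have "\<Phi> (\<Delta> \<tau>) \<zeta> = Some (trm X (g \<zeta>) \<tau>)" unfolding \<Phi>_def using z \<nu>\<Delta>[OF z] tT unfolding ginv_def by simp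
    also have "\<dots> = rmul T (trm X) \<tau> \<zeta>" using z[unfolded Z_def]
    proof (rule Sdot_cases)
      assume z0: "\<zeta> = None"
      have "trm X (g \<zeta>) \<tau> = \<tau>" using z0 gN tid TP'[OF that] by simp
      thus ?thesis using z z0 unfolding Z_def by (simp add: rmul_app)
    next
      fix \<sigma> assume "\<sigma> \<in> T" "\<zeta> = Some \<sigma>"
      thus ?thesis using z gS unfolding Z_def by (simp add: rmul_app)
    qed
    finally show "\<Phi> (\<Delta> \<tau>) \<zeta> = rmul T (trm X) \<tau> \<zeta>" .
  qed
  have \<Phi>\<kappa>: "\<Phi> (\<kappa> \<zeta>') = cst T (trm X) \<zeta>'" if "\<zeta>' \<in> Z" for \<zeta>'
  proof (rule ext_eqI)
    show "\<Phi> (\<kappa> \<zeta>') \<in> extensional Z" unfolding \<Phi>_def by simp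
    show "cst T (trm X) \<zeta>' \<in> extensional Z" unfolding cst_def Z_def by simp
    fix \<zeta> assume z: "\<zeta> \<in> Z"
    show "\<Phi> (\<kappa> \<zeta>') \<zeta> = cst T (trm X) \<zeta>' \<zeta>" unfolding \<Phi>_def cst_def using z \<nu>\<kappa>[OF z that] ginvg[OF that]
      unfolding Z_def by simp
  qed
  have img: "\<Phi> ` U = bar_carrier T (trm X)"
  proof -
    have "\<Phi> ` \<Delta> ` T = rmul T (trm X) ` T" using \<Phi>\<Delta> by (simp add: image_image)
    moreover have "\<Phi> ` \<kappa> ` Z = cst T (trm X) ` Z" using \<Phi>\<kappa> by (simp add: image_image)
    ultimately show ?thesis unfolding U_def bar_carrier_def Z_def by (simp add: image_Un)
  qed
  have pmx: "pm p q x = trm X (p x) (q x)" if "x \<in> X" for p q x unfolding pm_def pow_mult_def using that by simp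
  have pmext: "pm p q \<in> extensional X" for p q unfolding pm_def pow_mult_def by simp
  have hom: "\<Phi> (pm p q) = trm Z (\<Phi> p) (\<Phi> q)" if "p \<in> U" "q \<in> U" for p q
  proof (rule ext_eqI[OF _ trm_ext])
    show "\<Phi> (pm p q) \<in> extensional Z" unfolding \<Phi>_def by simp
    fix \<zeta> assume z: "\<zeta> \<in> Z"
    have pz: "\<nu> p \<zeta> \<in> GG" by (rule \<nu>U[OF that(1) z])
    have Pz: "\<Phi> p \<zeta> = ginv (\<nu> p \<zeta>)" unfolding \<Phi>_def using z by simp
    have PZ: "\<Phi> p \<zeta> \<in> Z" using Pz ginvZ[OF pz] by simp
    have "\<nu> q (\<Phi> p \<zeta>) = \<nu> (pm p q) \<zeta>"
    proof (rule ext_eqI)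
      show "\<nu> q (\<Phi> p \<zeta>) \<in> extensional X" unfolding \<nu>_def by simp
      show "\<nu> (pm p q) \<zeta> \<in> extensional X" unfolding \<nu>_def by simp
      fix x assume x: "x \<in> X"
      have gP: "g (\<Phi> p \<zeta>) = \<nu> p \<zeta>" using Pz gginv[OF pz] by simp
      have "\<nu> q (\<Phi> p \<zeta>) x = q x (g (\<Phi> p \<zeta>) x)" using x by (simp add: \<nu>_def)
      also have "\<dots> = q x (\<nu> p \<zeta> x)" using gP by simp
      also have "\<dots> = q x (p x (g \<zeta> x))" using x by (simp add: \<nu>_def)
      also have "\<dots> = trm X (p x) (q x) (g \<zeta> x)" using gzx[OF z x] by (simp add: trm_app)
      also have "\<dots> = \<nu> (pm p q) \<zeta> x" using x pmx[OF x] by (simp add: \<nu>_def)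
      finally show "\<nu> q (\<Phi> p \<zeta>) x = \<nu> (pm p q) \<zeta> x" .
    qed
    have \<Phi>Z: "\<Phi> r w = ginv (\<nu> r w)" if "w \<in> Z" for r w unfolding \<Phi>_def using that by simp
    have "\<Phi> q (\<Phi> p \<zeta>) = ginv (\<nu> q (\<Phi> p \<zeta>))" by (rule \<Phi>Z[OF PZ])
    also have "\<dots> = ginv (\<nu> (pm p q) \<zeta>)" using \<open>\<nu> q (\<Phi> p \<zeta>) = \<nu> (pm p q) \<zeta>\<close> by simp
    also have "\<dots> = \<Phi> (pm p q) \<zeta>" by (rule \<Phi>Z[OF z, symmetric])
    finally have "\<Phi> q (\<Phi> p \<zeta>) = \<Phi> (pm p q) \<zeta>" .
    thus "\<Phi> (pm p q) \<zeta> = trm Z (\<Phi> p) (\<Phi> q) \<zeta>" using z by (simp add: trm_app)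
  qed
  have cl: "pm p q \<in> U" if "p \<in> U" "q \<in> U" for p q
  proof -
    have c1: "pm (\<Delta> \<tau>) (\<Delta> \<tau>') \<in> U" if "\<tau> \<in> T" "\<tau>' \<in> T" for \<tau> \<tau>'
    proof -
      have "pm (\<Delta> \<tau>) (\<Delta> \<tau>') = \<Delta> (trm X \<tau> \<tau>')" unfolding pm_def pow_mult_def \<Delta>_def by (intro ext) simp
      thus ?thesis unfolding U_def using Tc[OF that] by blast
    qed
    have c2: "pm (\<Delta> \<tau>) (\<kappa> \<zeta>) \<in> U" if "\<tau> \<in> T" "\<zeta> \<in> Z" for \<tau> \<zeta>
    proof -
      have "pm (\<Delta> \<tau>) (\<kappa> \<zeta>) = \<kappa> \<zeta>"
      proof (rule ext_eqI[OF pmext])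
        show "\<kappa> \<zeta> \<in> extensional X" unfolding \<kappa>_def by simp
        fix x assume x: "x \<in> X"
        show "pm (\<Delta> \<tau>) (\<kappa> \<zeta>) x = \<kappa> \<zeta> x" using pmx[OF x] x trm_const_right[OF TP'[OF that(1)]]
          unfolding \<Delta>_def \<kappa>_def by simp
      qed
      thus ?thesis unfolding U_def using that(2) by blast
    qed
    have c3: "pm (\<kappa> \<zeta>) (\<Delta> \<tau>) \<in> U" if "\<tau> \<in> T" "\<zeta> \<in> Z" for \<tau> \<zeta>
    proof -
      let ?n = "trm X (g \<zeta>) \<tau>"
      have nT: "?n \<in> T" by (rule GGc[OF gZ[OF that(2)] that(1)])
      hence nG: "?n \<in> GG" unfolding GG_def by blast
      have "pm (\<kappa> \<zeta>) (\<Delta> \<tau>) = \<kappa> (ginv ?n)"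
      proof (rule ext_eqI[OF pmext])
        show "\<kappa> (ginv ?n) \<in> extensional X" unfolding \<kappa>_def by simp
        fix x assume x: "x \<in> X"
        have "pm (\<kappa> \<zeta>) (\<Delta> \<tau>) x = trm X (restrict (\<lambda>_. g \<zeta> x) X) \<tau>" using pmx[OF x] x unfolding \<Delta>_def \<kappa>_def by simp
        also have "\<dots> = restrict (\<lambda>_. \<tau> (g \<zeta> x)) X" by (rule trm_const_left[OF gzx[OF that(2) x]])
        also have "\<dots> = restrict (\<lambda>_. g (ginv ?n) x) X" using gginv[OF nG] x by (simp add: trm_app)
        also have "\<dots> = \<kappa> (ginv ?n) x" unfolding \<kappa>_def using x by simp
        finally show "pm (\<kappa> \<zeta>) (\<Delta> \<tau>) x = \<kappa> (ginv ?n) x" .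
      qed
      thus ?thesis unfolding U_def using ginvZ[OF nG] by blast
    qed
    have c4: "pm (\<kappa> \<zeta>) (\<kappa> \<zeta>') \<in> U" if "\<zeta> \<in> Z" "\<zeta>' \<in> Z" for \<zeta> \<zeta>'
    proof -
      have "pm (\<kappa> \<zeta>) (\<kappa> \<zeta>') = \<kappa> \<zeta>'"
      proof (rule ext_eqI[OF pmext])
        show "\<kappa> \<zeta>' \<in> extensional X" unfolding \<kappa>_def by simp
        fix x assume x: "x \<in> X"
        have "restrict (\<lambda>_. g \<zeta> x) X \<in> X \<rightarrow>\<^sub>E X" using gzx[OF that(1) x] by simp
        note tc = trm_const_right[OF this, of "g \<zeta>' x"]
        thus "pm (\<kappa> \<zeta>) (\<kappa> \<zeta>') x = \<kappa> \<zeta>' x" using pmx[OF x] x unfolding \<kappa>_def by simp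
      qed
      thus ?thesis unfolding U_def using that(2) by blast
    qed
    show ?thesis using that c1 c2 c3 c4 unfolding U_def by blast
  qed
  have mP: "memb W P pm" unfolding P_def pm_def by (rule memb_pow[OF V mT fX])
  have fP: "fsg P pm" using memb_fsg[OF V mP] .
  have sU: "sgrp U pm" unfolding sgrp_def
  proof (intro conjI ballI)
    obtain x0 where "x0 \<in> X" using XN by blast
    hence "\<Delta> (restrict (\<lambda>_. x0) X) \<in> U" unfolding U_def using Tk by blast
    thus "U \<noteq> {}" by blast
  next
    fix p q assume "p \<in> U" "q \<in> U" thus "pm p q \<in> U" by (rule cl)
  next
    fix p q r assume "p \<in> U" "q \<in> U" "r \<in> U"
    hence "p \<in> P" "q \<in> P" "r \<in> P" using UP by blast+
    thus "pm (pm p q) r = pm p (pm q r)" using sgrpD(3)[of P pm] fP unfolding fsg_def by blast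
  qed
  have sh: "shom \<Phi> U pm (bar_carrier T (trm X)) (trm Z)" unfolding shom_def
  proof (intro conjI ballI)
    fix p assume "p \<in> U" thus "\<Phi> p \<in> bar_carrier T (trm X)" using img by blast
  next
    fix p q assume "p \<in> U" "q \<in> U" thus "\<Phi> (pm p q) = trm Z (\<Phi> p) (\<Phi> q)" by (rule hom)
  qed
  have fT: "fsg T (trm X)" by (rule memb_fsg[OF V mT])
  have fb: "fsg (bar_carrier T (trm X)) (trm Z)" using fsg_bar[OF fT] unfolding bar_mult_trm Z_def .
  have "memb W (bar_carrier T (trm X)) (trm Z)" by (rule memb_div[OF V mP UP sU sh img fb])
  thus ?thesis unfolding bar_mult_trm Z_def .
qed

lemma bar_bar:
  assumes V: "pseudovariety W" and fA: "fsg A m" and mb: "memb W (bar_carrier A m) (bar_mult A m)"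
  shows "memb W (bar_carrier (bar_carrier A m) (bar_mult A m)) (bar_mult (bar_carrier A m) (bar_mult A m))"
proof -
  have sA: "sgrp A m" and finA: "finite A" using fA unfolding fsg_def by auto
  let ?X = "Sdot A m" and ?F = "rmul A m ` A"
  have cF: "tclosed ?X ?F" by (rule tclosed_rmul[OF sA])
  show ?thesis unfolding bar_mult_trm[of A m] bar_carrier_Tr[of A m]
  proof (rule bar_bar_gen[OF V])
    show "memb W (Tr ?X ?F) (trm ?X)" using mb unfolding bar_mult_trm bar_carrier_Tr .
    show "finite ?X" by (rule finite_Sdot[OF finA])
    show "?X \<noteq> {}" by (rule Sdot_ne[OF sgrpD(1)[OF sA]])
    show "Tr ?X ?F \<subseteq> ?X \<rightarrow>\<^sub>E ?X" by (rule Tr_sub[OF cF])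
    show "\<And>a b. a \<in> Tr ?X ?F \<Longrightarrow> b \<in> Tr ?X ?F \<Longrightarrow> trm ?X a b \<in> Tr ?X ?F" by (rule Tr_closed[OF cF])
    show "\<And>c. c \<in> ?X \<Longrightarrow> restrict (\<lambda>_. c) ?X \<in> Tr ?X ?F" by (rule Tr_const)
  qed
qed



lemma KK_mem: "(A, m) \<in> V \<Longrightarrow> (bar_carrier A m, bar_mult A m) \<in> KK V"
  unfolding KK_def by blast

lemma KK_E: assumes "(C, p) \<in> KK V" obtains A m where "(A, m) \<in> V" "C = bar_carrier A m" "p = bar_mult A m"
  using assms unfolding KK_def by blast

lemma P1: "pseudovariety V \<Longrightarrow> pseudovariety (pv_bar V)"
  unfolding pv_bar_KK by (rule pv_gen_pv[OF allfsg_KK])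

lemma P2: "V \<subseteq> W \<Longrightarrow> pv_bar V \<subseteq> pv_bar W"
  unfolding pv_bar_KK by (rule pv_gen_mono) (auto simp: KK_def)

lemma memb_bar_in_pv_bar: assumes "pseudovariety V" "(A, m) \<in> V"
  shows "memb (pv_bar V) (bar_carrier A m) (bar_mult A m)"
  unfolding pv_bar_KK by (rule pv_gen_memb[OF allfsg_KK[OF assms(1)] KK_mem[OF assms(2)]])

lemma P4: assumes V: "pseudovariety V" shows "V \<subseteq> pv_bar V"
proof
  fix x assume x: "x \<in> V"
  obtain A m where xx: "x = (A, m)" by (cases x)
  have Am: "(A, m) \<in> V" using x xx by simp
  have "memb (pv_bar V) A m"
    by (rule memb_of_bar[OF P1[OF V] memb_bar_in_pv_bar[OF V Am] pvD(1)[OF V Am]])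
  hence "(A, m) \<in> pv_bar V" by (rule mem_of_memb[OF P1[OF V]])
  thus "x \<in> pv_bar V" using xx by simp
qed

lemma P5: assumes V: "pseudovariety V" shows "pv_bar (pv_bar V) = pv_bar V"
proof
  let ?W = "pv_bar V"
  have pW: "pseudovariety ?W" by (rule P1[OF V])
  show "pv_bar ?W \<subseteq> ?W" unfolding pv_bar_KK[of ?W]
  proof (rule pv_gen_least[OF pW])
    fix C p assume "(C, p) \<in> KK ?W"
    then obtain B n where Bn: "(B, n) \<in> ?W" "C = bar_carrier B n" "p = bar_mult B n" by (rule KK_E)
    have "memb ?W (bar_carrier B n) (bar_mult B n)"
    proof (rule K1[OF pW allfsg_KK[OF V]])
      fix A' m' assume "(A', m') \<in> KK V"
      then obtain A m where Am: "(A, m) \<in> V" "A' = bar_carrier A m" "m' = bar_mult A m" by (rule KK_E)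
      show "memb ?W (bar_carrier A' m') (bar_mult A' m')"
        unfolding Am(2,3) by (rule bar_bar[OF pW pvD(1)[OF V Am(1)] memb_bar_in_pv_bar[OF V Am(1)]])
    next
      show "(B, n) \<in> pv_gen (KK V)" using Bn(1) unfolding pv_bar_KK .
    qed
    thus "memb ?W C p" using Bn by simp
  qed
  show "?W \<subseteq> pv_bar ?W" by (rule P4[OF pW])
qed

lemma allfsg_single: "fsg A m \<Longrightarrow> allfsg {(A, m)}"
  unfolding allfsg_def by simp

lemma P6: assumes fA: "fsg A m"
  shows "pv_bar (pv_gen {(A, m)}) = pv_gen {(bar_carrier A m, bar_mult A m)}"
proof
  let ?G = "pv_gen {(A, m)}" and ?H = "pv_gen {(bar_carrier A m, bar_mult A m)}"
  have pG: "pseudovariety ?G" by (rule pv_gen_pv[OF allfsg_single[OF fA]])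
  have pH: "pseudovariety ?H" by (rule pv_gen_pv[OF allfsg_single[OF fsg_bar[OF fA]]])
  show "pv_bar ?G \<subseteq> ?H" unfolding pv_bar_KK
  proof (rule pv_gen_least[OF pH])
    fix C p assume "(C, p) \<in> KK ?G"
    then obtain B n where Bn: "(B, n) \<in> ?G" "C = bar_carrier B n" "p = bar_mult B n" by (rule KK_E)
    have "memb ?H (bar_carrier B n) (bar_mult B n)"
    proof (rule K1[OF pH allfsg_single[OF fA]])
      fix A' m' assume "(A', m') \<in> {(A, m)}"
      hence "A' = A" "m' = m" by auto
      thus "memb ?H (bar_carrier A' m') (bar_mult A' m')"
        using pv_gen_memb[OF allfsg_single[OF fsg_bar[OF fA]]] by simp
    next
      show "(B, n) \<in> ?G" by (rule Bn(1))
    qed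
    thus "memb ?H C p" using Bn by simp
  qed
  show "?H \<subseteq> pv_bar ?G"
  proof (rule pv_gen_least[OF P1[OF pG]])
    fix C p assume "(C, p) \<in> {(bar_carrier A m, bar_mult A m)}"
    hence Cp: "C = bar_carrier A m" "p = bar_mult A m" by auto
    have "memb ?G A m" using pv_gen_memb[OF allfsg_single[OF fA]] by simp
    then obtain B n where Bn: "(B, n) \<in> ?G" "isomorphic B n A m" by (rule membE)
    obtain h where h: "shom h B n A m" "h ` B = A" using iso_hom[OF Bn(2)] by blast
    have "memb (pv_bar ?G) (bar_carrier A m) (bar_mult A m)"
      by (rule bar_hom[OF P1[OF pG] memb_bar_in_pv_bar[OF pG Bn(1)] pvD(1)[OF pG Bn(1)] fA h])
    thus "memb (pv_bar ?G) C p" using Cp by simp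
  qed
qed

lemma pv_Union_directed:
  assumes d: "directed \<V>" and pv: "\<forall>V\<in>\<V>. pseudovariety V"
  shows "pseudovariety (\<Union>\<V>)"
proof -
  have a: "\<And>V. V \<in> \<V> \<Longrightarrow> pseudovariety V" using pv by blast
  obtain V0 where V0: "V0 \<in> \<V>" using d unfolding directed_def by blast
  have up: "\<exists>U\<in>\<V>. V \<subseteq> U \<and> W \<subseteq> U" if "V \<in> \<V>" "W \<in> \<V>" for V W using d that unfolding directed_def by blast
  have c1: "\<forall>(A, m)\<in>\<Union>\<V>. fsg A m"
  proof
    fix x assume "x \<in> \<Union>\<V>"
    then obtain V where V: "V \<in> \<V>" "x \<in> V" by blast
    thus "case x of (A, m) \<Rightarrow> fsg A m" using pvD(1)[OF a[OF V(1)]] by (cases x) simp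
  qed
  have c2: "(A, m) \<in> \<Union>\<V>" if "fsg A m" "card A = 1" for A m
    using pvD(2)[OF a[OF V0] that] V0 by blast
  have c3: "(C, p) \<in> \<Union>\<V>" if pr: "(A, m) \<in> \<Union>\<V>" "(B, n) \<in> \<Union>\<V>" "fsg C p" "isomorphic (A \<times> B) (prod_mult m n) C p" for A B C m n p
  proof -
    obtain V1 where V1: "V1 \<in> \<V>" "(A, m) \<in> V1" using pr(1) by blast
    obtain V2 where V2: "V2 \<in> \<V>" "(B, n) \<in> V2" using pr(2) by blast
    obtain U where U: "U \<in> \<V>" "V1 \<subseteq> U" "V2 \<subseteq> U" using up[OF V1(1) V2(1)] by blast
    have "(A, m) \<in> U" "(B, n) \<in> U" using V1 V2 U by blast+
    hence "(C, p) \<in> U" using pvD(3)[OF a[OF U(1)] _ _ pr(3,4)] by blast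
    thus ?thesis using U(1) by blast
  qed
  have c4: "(B, m) \<in> \<Union>\<V>" if pr: "(A, m) \<in> \<Union>\<V>" "B \<subseteq> A" "sgrp B m" for A B m
  proof -
    obtain V1 where V1: "V1 \<in> \<V>" "(A, m) \<in> V1" using pr(1) by blast
    hence "(B, m) \<in> V1" using pvD(4)[OF a[OF V1(1)] _ pr(2,3)] by blast
    thus ?thesis using V1(1) by blast
  qed
  have c5: "(B, n) \<in> \<Union>\<V>" if pr: "(A, m) \<in> \<Union>\<V>" "fsg B n" "shom h A m B n" "h ` A = B" for A B m n h
  proof -
    obtain V1 where V1: "V1 \<in> \<V>" "(A, m) \<in> V1" using pr(1) by blast
    hence "(B, n) \<in> V1" using pvD(5)[OF a[OF V1(1)] _ pr(2,3,4)] by blast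
    thus ?thesis using V1(1) by blast
  qed
  show ?thesis unfolding pseudovariety_def
    apply (intro conjI allI impI)
        apply (rule c1)
       apply (erule conjE, erule (1) c2)
      apply (elim conjE, erule (3) c3)
     apply (elim conjE, erule (2) c4)
    apply (elim conjE, erule (3) c5)
    done
qed

lemma allfsg_pv: "pseudovariety V \<Longrightarrow> allfsg V"
  unfolding allfsg_def using pvD(1) by blast

lemma P3: assumes d: "directed \<V>" and pv: "\<forall>V\<in>\<V>. pseudovariety V"
  shows "pv_bar (pv_Join \<V>) = pv_Join (pv_bar ` \<V>)"
proof -
  have pU: "pseudovariety (\<Union>\<V>)" by (rule pv_Union_directed[OF d pv])
  have J: "pv_Join \<V> = \<Union>\<V>" unfolding pv_Join_def by (rule pv_gen_of_pv[OF pU])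
  have KU: "KK (\<Union>\<V>) = (\<Union>V\<in>\<V>. KK V)" unfolding KK_def by blast
  let ?L = "pv_gen (\<Union>V\<in>\<V>. KK V)" and ?R = "pv_gen (\<Union>V\<in>\<V>. pv_gen (KK V))"
  have aK: "allfsg (\<Union>V\<in>\<V>. KK V)" using allfsg_KK pv unfolding allfsg_def by blast
  have aR: "allfsg (\<Union>V\<in>\<V>. pv_gen (KK V))"
    using allfsg_pv pv_gen_pv[OF allfsg_KK] pv unfolding allfsg_def by blast
  have pL: "pseudovariety ?L" by (rule pv_gen_pv[OF aK])
  have pR: "pseudovariety ?R" by (rule pv_gen_pv[OF aR])
  have "?L \<subseteq> ?R"
  proof (rule pv_gen_least[OF pR])
    fix A m assume "(A, m) \<in> (\<Union>V\<in>\<V>. KK V)"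
    then obtain V where V: "V \<in> \<V>" "(A, m) \<in> KK V" by blast
    have pVV: "pseudovariety V" using pv V(1) by blast
    have "memb (pv_gen (KK V)) A m" by (rule pv_gen_memb[OF allfsg_KK[OF pVV] V(2)])
    then obtain B n where Bn: "(B, n) \<in> pv_gen (KK V)" "isomorphic B n A m" by (rule membE)
    have "(B, n) \<in> (\<Union>V\<in>\<V>. pv_gen (KK V))" using Bn(1) V(1) by blast
    hence "memb ?R B n" by (rule pv_gen_memb[OF aR])
    thus "memb ?R A m" using Bn(2) by (rule memb_iso)
  qed
  moreover have "?R \<subseteq> ?L"
  proof (rule pv_gen_least[OF pL])
    fix A m assume "(A, m) \<in> (\<Union>V\<in>\<V>. pv_gen (KK V))"
    then obtain V where V: "V \<in> \<V>" "(A, m) \<in> pv_gen (KK V)" by blast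
    have "pv_gen (KK V) \<subseteq> ?L" by (rule pv_gen_mono) (use V(1) in blast)
    hence "(A, m) \<in> ?L" using V(2) by blast
    thus "memb ?L A m" by (rule memb_of_mem)
  qed
  ultimately have "?L = ?R" by blast
  moreover have "pv_bar (pv_Join \<V>) = ?L" unfolding J pv_bar_KK KU ..
  moreover have "pv_Join (pv_bar ` \<V>) = ?R" unfolding pv_Join_def pv_bar_KK by (simp add: image_image)
  ultimately show ?thesis by simp
qed



lemma rz_onto:
  assumes V: "pseudovariety W" and mS: "memb W S s" and rS: "\<forall>x\<in>S. \<forall>y\<in>S. s x y = y"
    and fT: "fsg T t" and rT: "\<forall>x\<in>T. \<forall>y\<in>T. t x y = y" and c: "card T \<le> card S"
  shows "memb W T t"
proof -
  have finS: "finite S" using memb_fsg[OF V mS] unfolding fsg_def by simp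
  have finT: "finite T" and sT: "sgrp T t" using fT unfolding fsg_def by auto
  obtain t0 where t0: "t0 \<in> T" using sgrpD(1)[OF sT] by blast
  obtain f where f: "f ` T \<subseteq> S" "inj_on f T" using card_le_inj[OF finT finS c] by blast
  define h where "h y = (if y \<in> f ` T then inv_into T f y else t0)" for y
  have hT: "h y \<in> T" for y unfolding h_def using t0 by (auto simp: inv_into_into)
  have img: "h ` S = T"
  proof
    show "h ` S \<subseteq> T" using hT by blast
    show "T \<subseteq> h ` S"
    proof
      fix x assume x: "x \<in> T"
      have "h (f x) = x" unfolding h_def using x f(2) by simp
      moreover have "f x \<in> S" using f(1) x by blast
      ultimately show "x \<in> h ` S" by (metis imageI)
    qed
  qed
  have "shom h S s T t" unfolding shom_def
  proof (intro conjI ballI)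
    fix x assume "x \<in> S" show "h x \<in> T" by (rule hT)
  next
    fix x y assume "x \<in> S" "y \<in> S"
    thus "h (s x y) = t (h x) (h y)" using rS rT hT by simp
  qed
  thus ?thesis using memb_hom[OF V mS _ img fT] by blast
qed

lemma fsg_rz: "k \<ge> 1 \<Longrightarrow> fsg {0..<k::nat} (\<lambda>x y. y)"
  unfolding fsg_def sgrp_def by auto

lemma rz_all:
  assumes V: "pseudovariety W" and mC: "memb W C p" and rC: "\<forall>x\<in>C. \<forall>y\<in>C. p x y = y" and c2: "card C \<ge> 2"
  shows "k \<ge> 1 \<Longrightarrow> memb W {0..<k::nat} (\<lambda>x y. y)"
proof (induction k)
  case 0 thus ?case by simp
next
  case (Suc k)
  show ?case
  proof (cases "k = 0")
    case True
    thus ?thesis using memb_triv[OF V fsg_rz[of 1]] by simp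
  next
    case False
    hence IH: "memb W {0..<k} (\<lambda>x y. y)" using Suc.IH by simp
    have finC: "finite C" using memb_fsg[OF V mC] unfolding fsg_def by simp
    have mP: "memb W (C \<times> {0..<k}) (prod_mult p (\<lambda>x y. y))" by (rule memb_prod[OF V mC IH])
    have rP: "\<forall>x\<in>C \<times> {0..<k}. \<forall>y\<in>C \<times> {0..<k}. prod_mult p (\<lambda>x y. y) x y = y"
      using rC unfolding prod_mult_def by (auto simp: mem_Times_iff prod_eq_iff)
    have "card (C \<times> {0..<k}) = card C * k" by (simp add: card_cartesian_product)
    also have "\<dots> \<ge> 2 * k" using c2 by simp
    finally have "card {0..<Suc k} \<le> card (C \<times> {0..<k})" using False by simp
    thus ?thesis using rz_onto[OF V mP rP fsg_rz[of "Suc k"]] by simp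
  qed
qed

lemma P7:
  assumes V: "pseudovariety V" and ex: "\<exists>(A, m)\<in>V. card A \<ge> 2"
  shows "RZ \<subseteq> pv_bar V"
proof -
  obtain A m where Am: "(A, m) \<in> V" "card A \<ge> 2" using ex by blast
  let ?W = "pv_bar V"
  have pW: "pseudovariety ?W" by (rule P1[OF V])
  have fA: "fsg A m" by (rule pvD(1)[OF V Am(1)])
  have finA: "finite A" using fA unfolding fsg_def by simp
  let ?X = "Sdot A m"
  let ?C = "cst A m ` ?X"
  have mb: "memb ?W (bar_carrier A m) (trm ?X)" using memb_bar_in_pv_bar[OF V Am(1)] unfolding bar_mult_trm .
  have cP: "cst A m c \<in> ?X \<rightarrow>\<^sub>E ?X" if "c \<in> ?X" for c unfolding cst_def using that by simp
  have tc: "trm ?X (cst A m c) (cst A m d) = cst A m d" if "c \<in> ?X" for c d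
    unfolding cst_def by (rule trm_const_right[OF cP[OF that, unfolded cst_def]])
  have CS: "?C \<subseteq> bar_carrier A m" unfolding bar_carrier_def by blast
  have "A \<noteq> {}" using fA unfolding fsg_def sgrp_def by simp
  hence XN: "?X \<noteq> {}" by (rule Sdot_ne)
  have sC: "sgrp ?C (trm ?X)" unfolding sgrp_def
  proof (intro conjI ballI)
    show "?C \<noteq> {}" using XN by blast
  next
    fix f g assume "f \<in> ?C" "g \<in> ?C"
    then obtain c d where "c \<in> ?X" "d \<in> ?X" "f = cst A m c" "g = cst A m d" by blast
    thus "trm ?X f g \<in> ?C" using tc by simp
  next
    fix f g k assume "f \<in> ?C" "g \<in> ?C" "k \<in> ?C"
    hence "f \<in> ?X \<rightarrow>\<^sub>E ?X" "g \<in> ?X \<rightarrow>\<^sub>E ?X" using cP by blast+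
    thus "trm ?X (trm ?X f g) k = trm ?X f (trm ?X g k)" by (rule trm_assoc)
  qed
  have mC: "memb ?W ?C (trm ?X)" by (rule memb_sub[OF pW mb CS sC])
  have rC: "\<forall>x\<in>?C. \<forall>y\<in>?C. trm ?X x y = y" using tc by blast
  have injc: "inj_on (cst A m) ?X"
  proof (rule inj_onI)
    fix c d assume c: "c \<in> ?X" "d \<in> ?X" and e: "cst A m c = cst A m d"
    obtain x0 where x0: "x0 \<in> ?X" using XN by blast
    show "c = d" using fun_cong[OF e, of x0] x0 unfolding cst_def by simp
  qed
  have "card ?C = card ?X" using card_image[OF injc] .
  moreover have "card A \<le> card ?X"
  proof -
    have "Some ` A \<subseteq> ?X" by (auto simp: Some_in_Sdot)
    hence "card (Some ` A) \<le> card ?X" using finite_Sdot[OF finA] by (rule card_mono[rotated])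
    thus ?thesis by (simp add: card_image)
  qed
  ultimately have c2: "card ?C \<ge> 2" using Am(2) by simp
  show ?thesis
  proof
    fix x assume "x \<in> RZ"
    then obtain B n where Bn: "x = (B, n)" "fsg B n" "\<forall>x\<in>B. \<forall>y\<in>B. n x y = y" unfolding RZ_def by blast
    have "B \<noteq> {}" "finite B" using Bn(2) unfolding fsg_def sgrp_def by auto
    hence k: "card B \<ge> 1" by (simp add: Suc_le_eq card_gt_0_iff)
    have "memb ?W {0..<card B} (\<lambda>x y. y)" by (rule rz_all[OF pW mC rC c2 k])
    hence "memb ?W B n" by (rule rz_onto[OF pW _ _ Bn(2,3)]) auto
    hence "(B, n) \<in> ?W" by (rule mem_of_memb[OF pW])
    thus "x \<in> ?W" using Bn(1) by simp
  qed
qed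



theorem proposition2p5:
  shows "(\<forall>V. pseudovariety V \<longrightarrow> pseudovariety (pv_bar V))
    \<and> (\<forall>V W. pseudovariety V \<and> pseudovariety W \<and> V \<subseteq> W \<longrightarrow> pv_bar V \<subseteq> pv_bar W)
    \<and> (\<forall>\<V>. directed \<V> \<and> (\<forall>V\<in>\<V>. pseudovariety V)
           \<longrightarrow> pv_bar (pv_Join \<V>) = pv_Join (pv_bar ` \<V>))
    \<and> (\<forall>V. pseudovariety V \<longrightarrow> V \<subseteq> pv_bar V)
    \<and> (\<forall>V. pseudovariety V \<longrightarrow> pv_bar (pv_bar V) = pv_bar V)
    \<and> (\<forall>(A :: 'a set) m. fsg A m \<longrightarrow>
           pv_bar (pv_gen {(A, m)}) = pv_gen {(bar_carrier A m, bar_mult A m)})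
    \<and> (\<forall>V. pseudovariety V \<and> (\<exists>(A, m)\<in>V. card A \<ge> 2) \<longrightarrow> RZ \<subseteq> pv_bar V)
    \<and> (\<forall>(A :: 'a set) m (B :: 'b set) n. fsg A m \<and> fsg B n \<and> pv_gen {(A, m)} = pv_gen {(B, n)}
           \<longrightarrow> pv_gen {(bar_carrier A m, bar_mult A m)} = pv_gen {(bar_carrier B n, bar_mult B n)})"
proof (intro conjI)
  show "\<forall>V. pseudovariety V \<longrightarrow> pseudovariety (pv_bar V)" using P1 by blast
  show "\<forall>V W. pseudovariety V \<and> pseudovariety W \<and> V \<subseteq> W \<longrightarrow> pv_bar V \<subseteq> pv_bar W"
  proof (intro allI impI)
    fix V W :: "nsg set" assume "pseudovariety V \<and> pseudovariety W \<and> V \<subseteq> W"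
    thus "pv_bar V \<subseteq> pv_bar W" using P2 by blast
  qed
  show "\<forall>\<V>. directed \<V> \<and> (\<forall>V\<in>\<V>. pseudovariety V) \<longrightarrow> pv_bar (pv_Join \<V>) = pv_Join (pv_bar ` \<V>)"
  proof (intro allI impI)
    fix \<V> assume "directed \<V> \<and> (\<forall>V\<in>\<V>. pseudovariety V)"
    thus "pv_bar (pv_Join \<V>) = pv_Join (pv_bar ` \<V>)" using P3 by blast
  qed
  show "\<forall>V. pseudovariety V \<longrightarrow> V \<subseteq> pv_bar V" using P4 by blast
  show "\<forall>V. pseudovariety V \<longrightarrow> pv_bar (pv_bar V) = pv_bar V" using P5 by blast
  show "\<forall>(A :: 'a set) m. fsg A m \<longrightarrow> pv_bar (pv_gen {(A, m)}) = pv_gen {(bar_carrier A m, bar_mult A m)}"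
  proof (intro allI impI)
    fix A :: "'a set" and m assume "fsg A m"
    thus "pv_bar (pv_gen {(A, m)}) = pv_gen {(bar_carrier A m, bar_mult A m)}" by (rule P6)
  qed
  show "\<forall>V. pseudovariety V \<and> (\<exists>(A, m)\<in>V. card A \<ge> 2) \<longrightarrow> RZ \<subseteq> pv_bar V"
  proof (intro allI impI)
    fix V assume a: "pseudovariety V \<and> (\<exists>(A, m)\<in>V. card A \<ge> 2)"
    show "RZ \<subseteq> pv_bar V" by (rule P7) (use a in blast)+
  qed
  show "\<forall>(A :: 'a set) m (B :: 'b set) n. fsg A m \<and> fsg B n \<and> pv_gen {(A, m)} = pv_gen {(B, n)}
           \<longrightarrow> pv_gen {(bar_carrier A m, bar_mult A m)} = pv_gen {(bar_carrier B n, bar_mult B n)}"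
  proof (intro allI impI)
    fix A :: "'a set" and m and B :: "'b set" and n
    assume a: "fsg A m \<and> fsg B n \<and> pv_gen {(A, m)} = pv_gen {(B, n)}"
    have fA: "fsg A m" and fB: "fsg B n" and eq: "pv_gen {(A, m)} = pv_gen {(B, n)}" using a by simp_all
    have "pv_gen {(bar_carrier A m, bar_mult A m)} = pv_bar (pv_gen {(A, m)})" by (rule P6[OF fA, symmetric])
    also have "\<dots> = pv_bar (pv_gen {(B, n)})" by (simp only: eq)
    also have "\<dots> = pv_gen {(bar_carrier B n, bar_mult B n)}" by (rule P6[OF fB])
    finally show "pv_gen {(bar_carrier A m, bar_mult A m)} = pv_gen {(bar_carrier B n, bar_mult B n)}" .
  qed
qed



end
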